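(* Consider a market in which every hospital values all contracts equally, i.e. for each $h\in H$ there is $\gamma_h>0$ with $f_h(Y)=\gamma_h|Y|$ for all $Y\subseteq X_h$. For each $h$, let $\mathrm{Ch}_h$ be the choice function that, given $X'\subseteq X_h$, sorts $X'$ in non-decreasing order of wage (ties broken by a fixed order), starts with $Y=\emptyset$, goes through the sorted contracts adding each contract $x$ to $Y$ if $w_h(Y\cup\{x\})\le B_h$, and returns $Y$. Then the generalized deferred acceptance mechanism with these choice functions is strategy-proof for doctors and produces a $B_H$-stable matching.
   Context: A market consists of a finite set of doctors $D$, a finite set of hospitals $H$, a finite set of contracts $X\subseteq D\times H\times\mathbb{R}_{>0}$ (contract $x=(d,h,w)$ has doctor $x_D=d$, hospital $x_H=h$, wage $x_W=w$), strict preferences $\succ_d$ of each doctor $d$ over $X_d\cup\{\emptyset\}$, utilities $f_h$ of each hospital on subsets of $X_h$, and budgets $B_H=(B_h)_h$, $B_h>0$, with $0<x_W\le B_h$ for all $x\in X_h$. For $Y\subseteq X$: $Y_d=\{x\in Y:x_D=d\}$, $Y_h=\{x\in Y:x_H=h\}$, $w_h(Y)=\sum_{x\in Y_h}x_W$. A matching is $Y\subseteq X$ with $|Y_d|\le1$ for all $d$. A matching $Y$ is $B_H$-feasible if $w_h(Y)\le B_h$ for all $h$; a matching $Z\subseteq X_h$ blocks $Y$ if every doctor $x_D$ with $x\in Z\setminus Y$ strictly prefers $x$ to her contract in $Y$ (or to $\emptyset$), $f_h(Z)>f_h(Y_h)$ and $w_h(Z)\le B_h$; $Y$ is $B_H$-stable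 if it is $B_H$-feasible and not blocked by any $h$ and $Z\subseteq X_h$. Generalized deferred acceptance with hospital choice functions $\mathrm{Ch}_h$: let $\mathrm{Ch}_H(Y)=\bigcup_h\mathrm{Ch}_h(Y_h)$; $\mathrm{Ch}_d(Y)=\{x\}$ for the $\succ_d$-best $x\in Y_d$ if $x\succ_d\emptyset$, else $\emptyset$; $\mathrm{Ch}_D(Y)=\bigcup_d\mathrm{Ch}_d(Y_d)$. Set $R^{(0)}=\emptyset$; for $i=1,2,\dots$: $Y^{(i)}=\mathrm{Ch}_D(X\setminus R^{(i-1)})$, $Z^{(i)}=\mathrm{Ch}_H(Y^{(i)})$, $R^{(i)}=R^{(i-1)}\cup(Y^{(i)}\setminus Z^{(i)})$; if $Y^{(i)}=Z^{(i)}$, output $Y^{(i)}$. This is a mechanism mapping reported doctor preference profiles to matchings; it is strategy-proof for doctors if for every doctor $d$, every profile $\succ_D$ and every alternative report $\succ'_d$, the outcome of $d$ under $\succ_D$ is weakly $\succ_d$-preferred to her outcome under $(\succ'_d,\succ_{-d})$. *)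

theory Defs
  imports Complex_Main
begin

type_synonym ('d, 'h) contract = "'d \<times> 'h \<times> real"

definition doc :: "('d, 'h) contract \<Rightarrow> 'd" where "doc x = fst x"
definition hosp :: "('d, 'h) contract \<Rightarrow> 'h" where "hosp x = fst (snd x)"
definition wage :: "('d, 'h) contract \<Rightarrow> real" where "wage x = snd (snd x)"

definition contracts_of_doc :: "('d, 'h) contract set \<Rightarrow> 'd \<Rightarrow> ('d, 'h) contract set" where
  "contracts_of_doc Y d = {x \<in> Y. doc x = d}"

definition contracts_of_hosp :: "('d, 'h) contract set \<Rightarrow> 'h \<Rightarrow> ('d, 'h) contract set" where
  "contracts_of_hosp Y h = {x \<in> Y. hosp x = h}"

definition wsum :: "('d, 'h) contract set \<Rightarrow> real" where
  "wsum Y = (\<Sum>x\<in>Y. wage x)"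

definition w_h :: "'h \<Rightarrow> ('d, 'h) contract set \<Rightarrow> real" where
  "w_h h Y = wsum (contracts_of_hosp Y h)"

text \<open>A (reported) preference of a doctor: a strict relation on contract options
  (None = being unmatched). A preference profile assigns one to every doctor.\<close>
type_synonym ('d, 'h) pref = "('d, 'h) contract option \<Rightarrow> ('d, 'h) contract option \<Rightarrow> bool"
type_synonym ('d, 'h) profile = "'d \<Rightarrow> ('d, 'h) pref"

definition strict_order_on :: "'a set \<Rightarrow> ('a \<Rightarrow> 'a \<Rightarrow> bool) \<Rightarrow> bool" where
  "strict_order_on A p \<longleftrightarrow>
     (\<forall>a\<in>A. \<not> p a a) \<and>
     (\<forall>a\<in>A. \<forall>b\<in>A. \<forall>c\<in>A. p a b \<longrightarrow> p b c \<longrightarrow> p a c) \<and>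
     (\<forall>a\<in>A. \<forall>b\<in>A. a \<noteq> b \<longrightarrow> p a b \<or> p b a)"

definition valid_pref :: "('d, 'h) contract set \<Rightarrow> 'd \<Rightarrow> ('d, 'h) pref \<Rightarrow> bool" where
  "valid_pref X d p \<longleftrightarrow> strict_order_on (insert None (Some ` contracts_of_doc X d)) p"

definition valid_profile :: "'d set \<Rightarrow> ('d, 'h) contract set \<Rightarrow> ('d, 'h) profile \<Rightarrow> bool" where
  "valid_profile D X P \<longleftrightarrow> (\<forall>d\<in>D. valid_pref X d (P d))"

definition is_matching :: "('d, 'h) contract set \<Rightarrow> bool" where
  "is_matching Y \<longleftrightarrow> (\<forall>d. card (contracts_of_doc Y d) \<le> 1 \<and> finite (contracts_of_doc Y d))"

definition outcome :: "('d, 'h) contract set \<Rightarrow> 'd \<Rightarrow> ('d, 'h) contract option" where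
  "outcome Y d = (if \<exists>x\<in>Y. doc x = d then Some (THE x. x \<in> Y \<and> doc x = d) else None)"

definition feasible :: "'h set \<Rightarrow> ('h \<Rightarrow> real) \<Rightarrow> ('d, 'h) contract set \<Rightarrow> bool" where
  "feasible H B Y \<longleftrightarrow> (\<forall>h\<in>H. w_h h Y \<le> B h)"

definition blocks ::
  "('d, 'h) contract set \<Rightarrow> ('d, 'h) profile \<Rightarrow> ('h \<Rightarrow> ('d, 'h) contract set \<Rightarrow> real)
   \<Rightarrow> ('h \<Rightarrow> real) \<Rightarrow> 'h \<Rightarrow> ('d, 'h) contract set \<Rightarrow> ('d, 'h) contract set \<Rightarrow> bool" where
  "blocks X P f B h Z Y \<longleftrightarrow>
     Z \<subseteq> contracts_of_hosp X h \<and> is_matching Z \<and>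
     (\<forall>x\<in>Z - Y. P (doc x) (Some x) (outcome Y (doc x))) \<and>
     f h Z > f h (contracts_of_hosp Y h) \<and>
     w_h h Z \<le> B h"

definition stable ::
  "'h set \<Rightarrow> ('d, 'h) contract set \<Rightarrow> ('d, 'h) profile \<Rightarrow> ('h \<Rightarrow> ('d, 'h) contract set \<Rightarrow> real)
   \<Rightarrow> ('h \<Rightarrow> real) \<Rightarrow> ('d, 'h) contract set \<Rightarrow> bool" where
  "stable H X P f B Y \<longleftrightarrow>
     Y \<subseteq> X \<and> is_matching Y \<and> feasible H B Y \<and>
     \<not> (\<exists>h\<in>H. \<exists>Z. blocks X P f B h Z Y)"

definition Ch_D :: "('d, 'h) profile \<Rightarrow> ('d, 'h) contract set \<Rightarrow> ('d, 'h) contract set" where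
  "Ch_D P Y = {x \<in> Y. P (doc x) (Some x) None \<and>
                 (\<forall>y\<in>Y. doc y = doc x \<and> y \<noteq> x \<longrightarrow> P (doc x) (Some x) (Some y))}"

text \<open>Generalized deferred acceptance with hospitals' joint choice function ChH.
  gda_R k is R^(k); the round-(k+1) proposals are Ch_D(X - R^(k)).\<close>
primrec gda_R ::
  "('d, 'h) contract set \<Rightarrow> (('d, 'h) contract set \<Rightarrow> ('d, 'h) contract set) \<Rightarrow> ('d, 'h) profile
   \<Rightarrow> nat \<Rightarrow> ('d, 'h) contract set" where
  "gda_R X ChH P 0 = {}"
| "gda_R X ChH P (Suc k) =
     (let Y = Ch_D P (X - gda_R X ChH P k) in gda_R X ChH P k \<union> (Y - ChH Y))"

definition gda_Y ::
  "('d, 'h) contract set \<Rightarrow> (('d, 'h) contract set \<Rightarrow> ('d, 'h) contract set) \<Rightarrow> ('d, 'h) profile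
   \<Rightarrow> nat \<Rightarrow> ('d, 'h) contract set" where
  "gda_Y X ChH P k = Ch_D P (X - gda_R X ChH P k)"

definition gda ::
  "('d, 'h) contract set \<Rightarrow> (('d, 'h) contract set \<Rightarrow> ('d, 'h) contract set) \<Rightarrow> ('d, 'h) profile
   \<Rightarrow> ('d, 'h) contract set" where
  "gda X ChH P = gda_Y X ChH P (LEAST k. gda_Y X ChH P k = ChH (gda_Y X ChH P k))"

text \<open>Greedy hospital choice: sort by non-decreasing wage, ties broken by the
  position in the fixed list ord (sort_key is stable), add a contract whenever
  the total wage stays within the budget.\<close>
definition greedy_choice ::
  "('d, 'h) contract list \<Rightarrow> real \<Rightarrow> ('d, 'h) contract set \<Rightarrow> ('d, 'h) contract set" where
  "greedy_choice ord b X' =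
     fold (\<lambda>x Y. if wsum (insert x Y) \<le> b then insert x Y else Y)
          (sort_key wage (filter (\<lambda>x. x \<in> X') ord)) {}"

definition greedy_ChH ::
  "'h set \<Rightarrow> ('h \<Rightarrow> real) \<Rightarrow> ('d, 'h) contract list \<Rightarrow> ('d, 'h) contract set \<Rightarrow> ('d, 'h) contract set" where
  "greedy_ChH H B ord Y = (\<Union>h\<in>H. greedy_choice ord (B h) (contracts_of_hosp Y h))"

definition strategy_proof ::
  "'d set \<Rightarrow> ('d, 'h) contract set \<Rightarrow> (('d, 'h) profile \<Rightarrow> ('d, 'h) contract set) \<Rightarrow> bool" where
  "strategy_proof D X M \<longleftrightarrow>
     (\<forall>P d p'. valid_profile D X P \<longrightarrow> d \<in> D \<longrightarrow> valid_pref X d p' \<longrightarrow>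
        (let a = outcome (M P) d; b = outcome (M (P(d := p'))) d in a = b \<or> P d a b))"

definition market ::
  "'d set \<Rightarrow> 'h set \<Rightarrow> ('d, 'h) contract set \<Rightarrow> ('h \<Rightarrow> real) \<Rightarrow> bool" where
  "market D H X B \<longleftrightarrow> finite D \<and> finite H \<and> finite X \<and>
     (\<forall>x\<in>X. doc x \<in> D \<and> hosp x \<in> H \<and> 0 < wage x \<and> wage x \<le> B (hosp x)) \<and>
     (\<forall>h\<in>H. B h > 0)"

end

theory Submission
  imports Defs
begin
definition gstep :: "real \<Rightarrow> ('d,'h) contract \<Rightarrow> ('d,'h) contract set \<Rightarrow> ('d,'h) contract set" where
  "gstep b = (\<lambda>x Y. if wsum (insert x Y) \<le> b then insert x Y else Y)"

primrec lpos :: "'a list \<Rightarrow> 'a \<Rightarrow> nat" where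
  "lpos [] x = 0"
| "lpos (a#L) x = (if a = x then 0 else Suc (lpos L x))"

lemma wsum_insert: "finite Y \<Longrightarrow> a \<notin> Y \<Longrightarrow> wsum (insert a Y) = wage a + wsum Y"
  by (simp add: wsum_def)

lemma wsum_ge_elem:
  assumes "finite S" "x \<in> S" "\<forall>y\<in>S. 0 < wage y"
  shows "wage x \<le> wsum S"
proof -
  have "wsum S = wage x + wsum (S - {x})"
    using assms by (simp add: wsum_def sum.remove)
  moreover have "0 \<le> wsum (S - {x})" using assms unfolding wsum_def
    by (intro sum_nonneg) auto
  ultimately show ?thesis by simp
qed

lemma wsum_nonneg: "\<forall>y\<in>S. 0 < wage y \<Longrightarrow> 0 \<le> wsum S"
  unfolding wsum_def by (intro sum_nonneg) auto

lemma fold_gstep: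
  assumes "distinct L" "sorted (map wage L)" "\<forall>x\<in>set L. 0 < wage x"
    "finite Y" "Y \<inter> set L = {}"
  shows "fold (gstep b) (filter P L) Y =
     Y \<union> {x \<in> set L. P x \<and> wsum Y + wsum {y \<in> set L. P y \<and> lpos L y \<le> lpos L x} \<le> b}"
  using assms
proof (induction L arbitrary: Y)
  case Nil
  then show ?case by simp
next
  case (Cons a L)
  have aL: "a \<notin> set L" using Cons.prems by simp
  have pos: "\<forall>x\<in>set L. 0 < wage x" "0 < wage a" using Cons.prems by auto
  have geA: "\<forall>x\<in>set L. wage a \<le> wage x" using Cons.prems by simp
  define S where "S x = {y \<in> set L. P y \<and> lpos L y \<le> lpos L x}" for x
  have e1: "{y \<in> set (a#L). P y \<and> lpos (a#L) y \<le> lpos (a#L) x} =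
      (if P a then insert a (S x) else S x)" if "x \<in> set L" for x
    using that aL unfolding S_def by (auto split: if_splits)
  have e2: "{y \<in> set (a#L). P y \<and> lpos (a#L) y \<le> lpos (a#L) a} = (if P a then {a} else {})"
    using aL by auto
  have finS: "finite (S x)" for x unfolding S_def by simp
  have aS: "a \<notin> S x" for x using aL unfolding S_def by simp
  have Sge: "wage x \<le> wsum (S x)" if "x \<in> set L" "P x" for x
    using that pos by (intro wsum_ge_elem[OF finS]) (auto simp: S_def)
  have Snn: "0 \<le> wsum (S x)" for x using pos unfolding S_def by (intro wsum_nonneg) auto
  have IH: "fold (gstep b) (filter P L) Y' = Y' \<union> {x \<in> set L. P x \<and> wsum Y' + wsum (S x) \<le> b}"
    if "finite Y'" "Y' \<inter> set L = {}" for Y'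
    using Cons.IH[of Y'] Cons.prems that unfolding S_def by auto
  have tgt: "{x \<in> set (a#L). P x \<and> wsum Y + wsum {y \<in> set (a#L). P y \<and> lpos (a#L) y \<le> lpos (a#L) x} \<le> b}
     = (if P a \<and> wsum Y + wage a \<le> b then {a} else {}) \<union>
       {x \<in> set L. P x \<and> wsum Y + ((if P a then wage a else 0) + wsum (S x)) \<le> b}"
  proof -
    define F where "F x = wsum {y \<in> set (a#L). P y \<and> lpos (a#L) y \<le> lpos (a#L) x}" for x
    have FL: "F x = (if P a then wage a else 0) + wsum (S x)"
      if "x \<in> set L" for x
      using e1[OF that] wsum_insert[OF finS aS] unfolding F_def by simp
    have Fa: "F a = (if P a then wage a else 0)"
      using e2 unfolding F_def by (simp add: wsum_def)
    have "{x \<in> set (a#L). P x \<and> wsum Y + F x \<le> b}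
     = (if P a \<and> wsum Y + wage a \<le> b then {a} else {}) \<union>
       {x \<in> set L. P x \<and> wsum Y + ((if P a then wage a else 0) + wsum (S x)) \<le> b}"
    proof (rule set_eqI)
      fix x
      show "x \<in> {x \<in> set (a#L). P x \<and> wsum Y + F x \<le> b} \<longleftrightarrow> x \<in> (if P a \<and> wsum Y + wage a \<le> b then {a} else {}) \<union>
       {x \<in> set L. P x \<and> wsum Y + ((if P a then wage a else 0) + wsum (S x)) \<le> b}"
      proof (cases "x = a")
        case True
        then show ?thesis using Fa aL by auto
      next
        case False
        then show ?thesis using FL[of x] by (cases "x \<in> set L") auto
      qed
    qed
    then show ?thesis unfolding F_def .
  qed
  show ?case
  proof (cases "P a")
    case False
    then show ?thesis using IH[of Y] Cons.prems tgt by simp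
  next
    case True
    show ?thesis
    proof (cases "wsum (insert a Y) \<le> b")
      case fit: True
      have Ya: "a \<notin> Y" using Cons.prems by auto
      have "fold (gstep b) (filter P (a#L)) Y = fold (gstep b) (filter P L) (insert a Y)"
        using True fit by (simp add: gstep_def)
      also have "\<dots> = insert a Y \<union> {x \<in> set L. P x \<and> wsum (insert a Y) + wsum (S x) \<le> b}"
        using IH[of "insert a Y"] Cons.prems aL by auto
      finally show ?thesis using tgt True fit wsum_insert[OF Cons.prems(4) Ya]
        by (auto simp: algebra_simps)
    next
      case fail: False
      have Ya: "a \<notin> Y" using Cons.prems by auto
      have fl: "wsum Y + wage a > b" using fail wsum_insert[OF Cons.prems(4) Ya] by simp
      have "fold (gstep b) (filter P (a#L)) Y = fold (gstep b) (filter P L) Y"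
        using True fail by (simp add: gstep_def)
      also have "\<dots> = Y \<union> {x \<in> set L. P x \<and> wsum Y + wsum (S x) \<le> b}"
        using IH[of Y] Cons.prems by auto
      also have "{x \<in> set L. P x \<and> wsum Y + wsum (S x) \<le> b} = {}"
      proof -
        have "wsum Y + wsum (S x) > b" if "x \<in> set L" "P x" for x
          using Sge[OF that] geA that fl by force
        then show ?thesis by force
      qed
      moreover have "\<not> (wsum Y + ((if P a then wage a else 0) + wsum (S x)) \<le> b)" for x
        using fl Snn[of x] True by simp
      ultimately show ?thesis unfolding tgt using True fl by simp
    qed
  qed
qed

lemma lpos_inj: "distinct L \<Longrightarrow> x \<in> set L \<Longrightarrow> y \<in> set L \<Longrightarrow> lpos L x = lpos L y \<Longrightarrow> x = y"
  by (induction L) (auto split: if_splits)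

lemma lpos_wage: "sorted (map wage L) \<Longrightarrow> x \<in> set L \<Longrightarrow> y \<in> set L \<Longrightarrow> lpos L x < lpos L y \<Longrightarrow> wage x \<le> wage y"
  by (induction L) (auto split: if_splits)

definition idx :: "('d,'h) contract list \<Rightarrow> ('d,'h) contract \<Rightarrow> nat" where
  "idx ord x = lpos (sort_key wage ord) x"

definition pre :: "('d,'h) contract list \<Rightarrow> ('d,'h) contract set \<Rightarrow> ('d,'h) contract \<Rightarrow> ('d,'h) contract set" where
  "pre ord A x = {y \<in> set ord. y \<in> A \<and> idx ord y \<le> idx ord x}"

definition GC :: "('d,'h) contract list \<Rightarrow> real \<Rightarrow> ('d,'h) contract set \<Rightarrow> ('d,'h) contract set" where
  "GC ord b A = {x \<in> set ord. x \<in> A \<and> wsum (pre ord A x) \<le> b}"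

locale gr =
  fixes ord :: "('d,'h) contract list" and b :: real
  assumes dist: "distinct ord" and posw: "\<forall>x\<in>set ord. 0 < wage x" and bnn: "0 \<le> b"
begin

lemma g_eq: "greedy_choice ord b A = GC ord b A"
proof -
  have "greedy_choice ord b A = fold (gstep b) (filter (\<lambda>x. x \<in> A) (sort_key wage ord)) {}"
    unfolding greedy_choice_def gstep_def by (simp add: filter_sort)
  also have "\<dots> = {x \<in> set ord. x \<in> A \<and> 0 + wsum (pre ord A x) \<le> b}"
    by (subst fold_gstep) (use dist posw in \<open>auto simp: wsum_def pre_def idx_def\<close>)
  finally show ?thesis unfolding GC_def by simp
qed

lemma idx_inj: "x \<in> set ord \<Longrightarrow> y \<in> set ord \<Longrightarrow> idx ord x = idx ord y \<Longrightarrow> x = y"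
  unfolding idx_def using lpos_inj[of "sort_key wage ord"] dist by auto

lemma idx_wage: "x \<in> set ord \<Longrightarrow> y \<in> set ord \<Longrightarrow> idx ord x < idx ord y \<Longrightarrow> wage x \<le> wage y"
  unfolding idx_def using lpos_wage[of "sort_key wage ord"] by auto

lemma GC_sub: "GC ord b A \<subseteq> A \<inter> set ord"
  unfolding GC_def by auto

lemma wsum_mono: "S \<subseteq> T \<Longrightarrow> T \<subseteq> set ord \<Longrightarrow> wsum S \<le> wsum T"
  unfolding wsum_def using posw
  by (intro sum_mono2) (auto intro: finite_subset less_imp_le)

lemma GC_subst: "A \<subseteq> A' \<Longrightarrow> x \<in> A \<Longrightarrow> x \<in> GC ord b A' \<Longrightarrow> x \<in> GC ord b A"
proof -
  assume a: "A \<subseteq> A'" "x \<in> A" "x \<in> GC ord b A'"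
  have "wsum (pre ord A x) \<le> wsum (pre ord A' x)"
    using a by (intro wsum_mono) (auto simp: pre_def)
  then show ?thesis using a unfolding GC_def by auto
qed

lemma GC_prefix: "y \<in> GC ord b A \<Longrightarrow> z \<in> A \<Longrightarrow> z \<in> set ord \<Longrightarrow> idx ord z \<le> idx ord y \<Longrightarrow> z \<in> GC ord b A"
proof -
  assume a: "y \<in> GC ord b A" "z \<in> A" "z \<in> set ord" "idx ord z \<le> idx ord y"
  have "wsum (pre ord A z) \<le> wsum (pre ord A y)"
    using a by (intro wsum_mono) (auto simp: pre_def)
  then show ?thesis using a unfolding GC_def by auto
qed

lemma GC_feas: "wsum (GC ord b A) \<le> b"
proof (cases "GC ord b A = {}")
  case True then show ?thesis using bnn by (simp add: wsum_def)
next
  case False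
  have fin: "finite (GC ord b A)" using GC_sub by (meson finite_Int finite_set finite_subset)
  have "Max (idx ord ` GC ord b A) \<in> idx ord ` GC ord b A" using False fin by (intro Max_in) auto
  then obtain m where m0: "m \<in> GC ord b A" "idx ord m = Max (idx ord ` GC ord b A)" by auto
  have m: "m \<in> GC ord b A" "\<forall>y\<in>GC ord b A. idx ord y \<le> idx ord m"
    using m0 fin by auto
  have "GC ord b A = pre ord A m"
  proof
    show "GC ord b A \<subseteq> pre ord A m" using m GC_sub unfolding pre_def by auto
    show "pre ord A m \<subseteq> GC ord b A" using GC_prefix[OF m(1)] unfolding pre_def by auto
  qed
  then show ?thesis using m(1) unfolding GC_def by auto
qed

lemma GC_max:
  assumes Z: "Z \<subseteq> A \<inter> set ord" "wsum Z \<le> b"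
  shows "card Z \<le> card (GC ord b A)"
proof (cases "A \<inter> set ord \<subseteq> GC ord b A")
  case True
  have "finite (GC ord b A)" using GC_sub by (meson finite_Int finite_set finite_subset)
  then show ?thesis using Z True by (intro card_mono) auto
next
  case False
  let ?G = "GC ord b A"
  have finG: "finite ?G" using GC_sub by (meson finite_Int finite_set finite_subset)
  have finZ: "finite Z" using Z by (meson finite_Int finite_set finite_subset)
  obtain x0 where x0: "x0 \<in> A \<inter> set ord - ?G" "\<forall>y\<in>A \<inter> set ord - ?G. idx ord x0 \<le> idx ord y"
    using False ex_has_least_nat[of "\<lambda>x. x \<in> A \<inter> set ord - ?G" _ "idx ord"] by blast
  have Geq: "?G = {y \<in> A \<inter> set ord. idx ord y < idx ord x0}"
  proof
    show "?G \<subseteq> {y \<in> A \<inter> set ord. idx ord y < idx ord x0}"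
    proof
      fix y assume y: "y \<in> ?G"
      have "\<not> idx ord x0 \<le> idx ord y" using GC_prefix[OF y, of x0] x0 by auto
      then show "y \<in> {y \<in> A \<inter> set ord. idx ord y < idx ord x0}" using y GC_sub by auto
    qed
    show "{y \<in> A \<inter> set ord. idx ord y < idx ord x0} \<subseteq> ?G" using x0 by force
  qed
  have preq: "pre ord A x0 = insert x0 ?G"
  proof (rule set_eqI)
    fix y
    show "y \<in> pre ord A x0 \<longleftrightarrow> y \<in> insert x0 ?G"
      using idx_inj[of y x0] x0 unfolding Geq pre_def by (cases "y = x0") (auto simp: le_less)
  qed
  have x0G: "x0 \<notin> ?G" using x0 by auto
  have over: "wsum ?G + wage x0 > b"
    using x0 preq wsum_insert[OF finG x0G] unfolding GC_def by auto
  show ?thesis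
  proof (rule ccontr)
    assume "\<not> card Z \<le> card ?G"
    then have cz: "card Z > card ?G" by simp
    let ?Z1 = "Z \<inter> ?G" and ?Z2 = "Z - ?G" and ?G2 = "?G - Z"
    have c1: "card Z = card ?Z1 + card ?Z2" using finZ
      by (metis Diff_Diff_Int Int_commute card_Diff_subset_Int card_Int_Diff finite_Int)
    have c2: "card ?G = card ?Z1 + card ?G2" using finG
      by (metis Int_commute card_Int_Diff finite_Int inf.commute)
    have cc: "real (card ?Z2) \<ge> real (card ?G2) + 1" using c1 c2 cz by linarith
    have w0: "0 < wage x0" using x0 posw by auto
    have lz: "\<forall>z\<in>?Z2. wage x0 \<le> wage z"
    proof
      fix z assume z: "z \<in> ?Z2"
      then have "z \<in> A \<inter> set ord - ?G" using Z by auto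
      then have "idx ord x0 \<le> idx ord z" using x0 by auto
      then show "wage x0 \<le> wage z" using idx_wage[of x0 z] z Z x0
        by (cases "idx ord x0 = idx ord z") (auto dest: idx_inj)
    qed
    have ug: "\<forall>g\<in>?G2. wage g \<le> wage x0"
    proof
      fix g assume g: "g \<in> ?G2"
      then have "idx ord g < idx ord x0" using Geq by auto
      then show "wage g \<le> wage x0" using idx_wage[of g x0] g x0 GC_sub by auto
    qed
    have s2: "wsum ?Z2 \<ge> real (card ?Z2) * wage x0"
      unfolding wsum_def using sum_bounded_below[of ?Z2 "wage x0" wage] lz by simp
    have s3: "wsum ?G2 \<le> real (card ?G2) * wage x0"
      unfolding wsum_def using sum_bounded_above[of ?G2 wage "wage x0"] ug by simp
    have "real (card ?Z2) * wage x0 \<ge> (real (card ?G2) + 1) * wage x0"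
      using cc w0 by (intro mult_right_mono) auto
    then have "wsum ?Z2 \<ge> wsum ?G2 + wage x0" using s2 s3 by (simp add: algebra_simps)
    moreover have "wsum Z = wsum ?Z1 + wsum ?Z2" unfolding wsum_def using finZ
      by (metis Diff_Diff_Int Int_commute finite_Int sum.Int_Diff)
    moreover have "wsum ?G = wsum ?Z1 + wsum ?G2" unfolding wsum_def using finG
      by (metis Int_commute sum.Int_Diff)
    ultimately show False using over Z by linarith
  qed
qed

lemma GC_lad: "A \<subseteq> A' \<Longrightarrow> card (GC ord b A) \<le> card (GC ord b A')"
  using GC_max[of "GC ord b A" A'] GC_sub[of A] GC_feas[of A] by auto

end

lemma finite_max_strict:
  assumes "finite S" "S \<noteq> {}" "\<forall>a\<in>S. \<not> r a a"
    "\<forall>a\<in>S. \<forall>b\<in>S. \<forall>c\<in>S. r a b \<longrightarrow> r b c \<longrightarrow> r a c"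
    "\<forall>a\<in>S. \<forall>b\<in>S. a \<noteq> b \<longrightarrow> r a b \<or> r b a"
  shows "\<exists>m\<in>S. \<forall>y\<in>S. y \<noteq> m \<longrightarrow> r m y"
  using assms
proof (induction S rule: finite_ne_induct)
  case (singleton x) show ?case by (rule bexI[of _ x]) simp_all
next
  case (insert a F)
  have p1: "\<forall>a\<in>F. \<not> r a a" using insert.prems(1) by simp
  have p2: "\<forall>a\<in>F. \<forall>b\<in>F. \<forall>c\<in>F. r a b \<longrightarrow> r b c \<longrightarrow> r a c" using insert.prems(2) by (meson insertCI)
  have p3: "\<forall>a\<in>F. \<forall>b\<in>F. a \<noteq> b \<longrightarrow> r a b \<or> r b a" using insert.prems(3) by (meson insertCI)
  obtain m where m: "m \<in> F" "\<forall>y\<in>F. y \<noteq> m \<longrightarrow> r m y" using insert.IH[OF p1 p2 p3] by blast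
  have tr: "r u v \<Longrightarrow> r v w \<Longrightarrow> r u w" if "u \<in> insert a F" "v \<in> insert a F" "w \<in> insert a F" for u v w
    using insert.prems(2) that by blast
  show ?case
  proof (cases "r a m")
    case True
    have "\<forall>y\<in>insert a F. y \<noteq> a \<longrightarrow> r a y"
    proof (intro ballI impI)
      fix y assume y: "y \<in> insert a F" "y \<noteq> a"
      then have yF: "y \<in> F" by simp
      show "r a y"
      proof (cases "y = m")
        case True then show ?thesis using \<open>r a m\<close> by simp
      next
        case False
        then have "r m y" using m yF by auto
        then show ?thesis using tr[of a m y] \<open>r a m\<close> m yF by simp
      qed
    qed
    then show ?thesis by (intro bexI[of _ a]) auto
  next
    case False
    have "a \<noteq> m" using m insert.hyps by auto
    then have "r m a" using insert.prems(3) m(1) False by (meson insertCI)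
    then show ?thesis using m by (intro bexI[of _ m]) auto
  qed
qed


definition dom_d :: "('d,'h) contract set \<Rightarrow> 'd \<Rightarrow> ('d,'h) contract option set" where
  "dom_d X d = insert None (Some ` contracts_of_doc X d)"

lemma vp_so: "valid_pref X d p \<Longrightarrow> strict_order_on (dom_d X d) p"
  by (simp add: valid_pref_def dom_d_def)
lemma vp_irr: assumes "valid_pref X d p" "a \<in> dom_d X d" shows "\<not> p a a"
proof -
  have "\<forall>a\<in>dom_d X d. \<not> p a a" using vp_so[OF assms(1)] unfolding strict_order_on_def by (rule conjunct1)
  then show ?thesis using assms(2) by (rule bspec)
qed
lemma vp_trans: assumes "valid_pref X d p" "a \<in> dom_d X d" "b \<in> dom_d X d" "c \<in> dom_d X d" "p a b" "p b c" shows "p a c"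
proof -
  have T: "\<forall>a\<in>dom_d X d. \<forall>b\<in>dom_d X d. \<forall>c\<in>dom_d X d. p a b \<longrightarrow> p b c \<longrightarrow> p a c"
    using vp_so[OF assms(1)] unfolding strict_order_on_def by (elim conjE)
  have "p a b \<longrightarrow> p b c \<longrightarrow> p a c" using bspec[OF bspec[OF bspec[OF T assms(2)] assms(3)] assms(4)] .
  then show ?thesis using assms(5,6) by simp
qed
lemma vp_tot: assumes "valid_pref X d p" "a \<in> dom_d X d" "b \<in> dom_d X d" "a \<noteq> b" shows "p a b \<or> p b a"
proof -
  have T: "\<forall>a\<in>dom_d X d. \<forall>b\<in>dom_d X d. a \<noteq> b \<longrightarrow> p a b \<or> p b a"
    using vp_so[OF assms(1)] unfolding strict_order_on_def by (elim conjE)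
  have "a \<noteq> b \<longrightarrow> p a b \<or> p b a" using bspec[OF bspec[OF T assms(2)] assms(3)] .
  then show ?thesis using assms(4) by simp
qed
lemma vp_asym: assumes "valid_pref X d p" "a \<in> dom_d X d" "b \<in> dom_d X d" "p a b" shows "\<not> p b a"
proof
  assume "p b a"
  then have "p a a" using vp_trans[OF assms(1,2,3,2) assms(4)] by simp
  then show False using vp_irr[OF assms(1,2)] by simp
qed

lemma dom_None[simp]: "None \<in> dom_d X d" by (simp add: dom_d_def)
lemma dom_Some[simp]: "Some x \<in> dom_d X d \<longleftrightarrow> x \<in> X \<and> doc x = d"
  by (auto simp: dom_d_def contracts_of_doc_def)

lemma CD_iff: "z \<in> Ch_D P A \<longleftrightarrow> z \<in> A \<and> P (doc z) (Some z) None \<and>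
                 (\<forall>y\<in>A. doc y = doc z \<and> y \<noteq> z \<longrightarrow> P (doc z) (Some z) (Some y))"
  unfolding Ch_D_def by auto

lemma CD_sub: "Ch_D P A \<subseteq> A" unfolding Ch_D_def by auto

lemma CD_her: "z \<in> Ch_D P A \<Longrightarrow> z \<in> B \<Longrightarrow> B \<subseteq> A \<Longrightarrow> z \<in> Ch_D P B"
  unfolding Ch_D_def by auto

lemma CD_idem: "Ch_D P (Ch_D P A) = Ch_D P A"
proof
  show "Ch_D P (Ch_D P A) \<subseteq> Ch_D P A" by (rule CD_sub)
  show "Ch_D P A \<subseteq> Ch_D P (Ch_D P A)" using CD_her[OF _ _ CD_sub] by blast
qed

locale chsys =
  fixes D :: "'d set" and X :: "('d,'h) contract set"
    and C :: "('d,'h) contract set \<Rightarrow> ('d,'h) contract set"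
  assumes finX: "finite X"
  and docD: "\<forall>x\<in>X. doc x \<in> D"
  and C_sub: "\<And>A. C A \<subseteq> A"
  and subst: "\<And>A B. A \<subseteq> B \<Longrightarrow> B \<subseteq> X \<Longrightarrow> A \<inter> C B \<subseteq> C A"
  and lad: "\<And>A B. A \<subseteq> B \<Longrightarrow> B \<subseteq> X \<Longrightarrow> card (C A) \<le> card (C B)"
begin

lemma irc: "C B \<subseteq> A \<Longrightarrow> A \<subseteq> B \<Longrightarrow> B \<subseteq> X \<Longrightarrow> C A = C B"
proof -
  assume a: "C B \<subseteq> A" "A \<subseteq> B" "B \<subseteq> X"
  have s: "C B \<subseteq> C A" using subst[OF a(2,3)] a(1) by blast
  have f: "finite (C A)" using C_sub[of A] a finX by (meson finite_subset)
  show ?thesis using card_subset_eq[OF f s] lad[OF a(2,3)] card_mono[OF f s] by simp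
qed

lemma vpd: "valid_profile D X P \<Longrightarrow> z \<in> X \<Longrightarrow> valid_pref X (doc z) (P (doc z))"
  using docD unfolding valid_profile_def by auto

lemma CD_best: "z \<in> Ch_D P A \<Longrightarrow> y \<in> A \<Longrightarrow> doc y = doc z \<Longrightarrow> y \<noteq> z \<Longrightarrow> P (doc z) (Some z) (Some y)"
  unfolding Ch_D_def by blast

lemma CD_acc: "z \<in> Ch_D P A \<Longrightarrow> P (doc z) (Some z) None"
  unfolding Ch_D_def by blast

lemma CD_uniq: "valid_profile D X P \<Longrightarrow> A \<subseteq> X \<Longrightarrow> z \<in> Ch_D P A \<Longrightarrow> z' \<in> Ch_D P A \<Longrightarrow> doc z = doc z' \<Longrightarrow> z = z'"
proof (rule ccontr)
  assume a: "valid_profile D X P" "A \<subseteq> X" "z \<in> Ch_D P A" "z' \<in> Ch_D P A" "doc z = doc z'" "z \<noteq> z'"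
  have zA: "z \<in> A" "z' \<in> A" using a(3,4) CD_sub by blast+
  then have zX: "z \<in> X" "z' \<in> X" using a(2) by blast+
  have 1: "P (doc z) (Some z) (Some z')" using CD_best[OF a(3) zA(2)] a(5,6) by simp
  have 2: "P (doc z') (Some z') (Some z)" using CD_best[OF a(4) zA(1)] a(5,6) by simp
  have v: "valid_pref X (doc z) (P (doc z))" by (rule vpd[OF a(1) zX(1)])
  have d1: "Some z \<in> dom_d X (doc z)" "Some z' \<in> dom_d X (doc z)" using zX a(5) by simp_all
  show False using vp_asym[OF v d1(1) d1(2) 1] 2 a(5) by simp
qed

lemma CD_ex:
  assumes v: "valid_profile D X P" and A: "A \<subseteq> X" and z: "z \<in> A" "P (doc z) (Some z) None"
  shows "\<exists>y\<in>Ch_D P A. doc y = doc z"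
proof -
  define d where "d = doc z"
  have zX: "z \<in> X" using z A by blast
  have vp: "valid_pref X d (P d)" unfolding d_def by (rule vpd[OF v zX])
  define S where "S = {y \<in> A. doc y = d \<and> P d (Some y) None}"
  have "S \<subseteq> X" unfolding S_def using A by blast
  then have finS: "finite S" using finX by (rule finite_subset)
  have domS: "Some y \<in> dom_d X d" if "y \<in> S" for y using A that unfolding S_def by auto
  have ne: "S \<noteq> {}" using z unfolding S_def d_def by blast
  have "\<exists>m\<in>S. \<forall>y\<in>S. y \<noteq> m \<longrightarrow> P d (Some m) (Some y)"
  proof (rule finite_max_strict[OF finS ne])
    show "\<forall>a\<in>S. \<not> P d (Some a) (Some a)" using vp_irr[OF vp domS] by blast
    show "\<forall>a\<in>S. \<forall>b\<in>S. \<forall>c\<in>S. P d (Some a) (Some b) \<longrightarrow> P d (Some b) (Some c) \<longrightarrow> P d (Some a) (Some c)"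
      using vp_trans[OF vp domS domS domS] by blast
    show "\<forall>a\<in>S. \<forall>b\<in>S. a \<noteq> b \<longrightarrow> P d (Some a) (Some b) \<or> P d (Some b) (Some a)"
    proof (intro ballI impI)
      fix a b assume "a \<in> S" "b \<in> S" "a \<noteq> b"
      then show "P d (Some a) (Some b) \<or> P d (Some b) (Some a)" using vp_tot[OF vp domS domS, of a b] by simp
    qed
  qed
  then obtain m where m: "m \<in> S" "\<forall>y\<in>S. y \<noteq> m \<longrightarrow> P d (Some m) (Some y)" by blast
  have mA: "m \<in> A" and dm: "doc m = d" and macc: "P d (Some m) None" using m(1) unfolding S_def by blast+
  have "m \<in> Ch_D P A"
    unfolding CD_iff
  proof (intro conjI ballI impI)
    show "m \<in> A" by (rule mA)
    show "P (doc m) (Some m) None" using macc dm by simp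
    fix y assume y: "y \<in> A" "doc y = doc m \<and> y \<noteq> m"
    have yd: "Some y \<in> dom_d X d" using y A dm by auto
    have md: "Some m \<in> dom_d X d" using mA A dm by auto
    show "P (doc m) (Some m) (Some y)"
    proof (cases "P d (Some y) None")
      case True
      then have "y \<in> S" using y dm unfolding S_def by blast
      then show ?thesis using m(2) y dm by blast
    next
      case False
      have "P d None (Some y)" using vp_tot[OF vp dom_None yd] False by auto
      then show ?thesis using vp_trans[OF vp md dom_None yd macc] dm by simp
    qed
  qed
  then show ?thesis using dm d_def by blast
qed

end

definition hstable :: "('d,'h) contract set \<Rightarrow> (('d,'h) contract set \<Rightarrow> ('d,'h) contract set) \<Rightarrow> ('d,'h) profile \<Rightarrow> ('d,'h) contract set \<Rightarrow> bool" where
  "hstable X C P Y \<longleftrightarrow> Y \<subseteq> X \<and> Ch_D P Y = Y \<and> C Y = Y \<and>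
     (\<forall>Z. Z \<subseteq> X \<longrightarrow> Z \<noteq> {} \<longrightarrow> Z \<inter> Y = {} \<longrightarrow> Z \<subseteq> C (Y \<union> Z) \<longrightarrow> \<not> Z \<subseteq> Ch_D P (Y \<union> Z))"

context chsys
begin

lemma R_Suc: "gda_R X C P (Suc k) = gda_R X C P k \<union> (gda_Y X C P k - C (gda_Y X C P k))"
  by (simp add: gda_Y_def Let_def)

lemma Y_sub: "gda_Y X C P k \<subseteq> X - gda_R X C P k"
  unfolding gda_Y_def by (rule CD_sub)

lemma R_sub: "gda_R X C P k \<subseteq> X"
proof (induction k)
  case 0 then show ?case by simp
next
  case (Suc k)
  have "gda_Y X C P k \<subseteq> X" using Y_sub by blast
  then show ?case unfolding R_Suc using Suc by blast
qed

lemma R_mono: "j \<le> k \<Longrightarrow> gda_R X C P j \<subseteq> gda_R X C P k"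
proof (induction k)
  case 0 then show ?case by simp
next
  case (Suc k)
  show ?case
  proof (cases "j = Suc k")
    case True then show ?thesis by simp
  next
    case False
    then have "j \<le> k" using Suc.prems by simp
    then show ?thesis using Suc.IH unfolding R_Suc by blast
  qed
qed

lemma Y_persist:
  assumes "j \<le> k" "z \<in> gda_Y X C P j"
  shows "z \<in> gda_Y X C P k \<union> gda_R X C P k"
proof (cases "z \<in> gda_R X C P k")
  case True then show ?thesis by simp
next
  case False
  have zX: "z \<in> X" using assms(2) Y_sub by blast
  have sub: "X - gda_R X C P k \<subseteq> X - gda_R X C P j" using R_mono[OF assms(1)] by blast
  have "z \<in> Ch_D P (X - gda_R X C P k)"
    using CD_her[OF assms(2)[unfolded gda_Y_def] _ sub] zX False by blast
  then show ?thesis unfolding gda_Y_def by simp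
qed

lemma R_origin: "z \<in> gda_R X C P k \<Longrightarrow> \<exists>j<k. z \<in> gda_Y X C P j \<and> z \<notin> C (gda_Y X C P j)"
proof (induction k)
  case 0 then show ?case by simp
next
  case (Suc k)
  show ?case
  proof (cases "z \<in> gda_R X C P k")
    case True then show ?thesis using Suc.IH less_SucI by blast
  next
    case False
    then have "z \<in> gda_Y X C P k \<and> z \<notin> C (gda_Y X C P k)" using Suc.prems unfolding R_Suc by blast
    then show ?thesis by blast
  qed
qed

lemma YR_sub: "gda_Y X C P k \<union> gda_R X C P k \<subseteq> X"
  using Y_sub R_sub by blast

lemma C_YR: "C (gda_Y X C P k \<union> gda_R X C P k) \<subseteq> gda_Y X C P k"
proof
  fix z assume z: "z \<in> C (gda_Y X C P k \<union> gda_R X C P k)"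
  then have zin: "z \<in> gda_Y X C P k \<union> gda_R X C P k" using C_sub by blast
  show "z \<in> gda_Y X C P k"
  proof (rule ccontr)
    assume "z \<notin> gda_Y X C P k"
    then have "z \<in> gda_R X C P k" using zin by blast
    then obtain j where j: "j < k" "z \<in> gda_Y X C P j" "z \<notin> C (gda_Y X C P j)"
      using R_origin by blast
    have "gda_Y X C P j \<subseteq> gda_Y X C P k \<union> gda_R X C P k"
      using Y_persist[of j k] j(1) by auto
    then have "gda_Y X C P j \<inter> C (gda_Y X C P k \<union> gda_R X C P k) \<subseteq> C (gda_Y X C P j)"
      using subst YR_sub by blast
    then show False using j z by blast
  qed
qed

lemma C_Y_eq: "C (gda_Y X C P k) = C (gda_Y X C P k \<union> gda_R X C P k)"
  using irc[OF C_YR _ YR_sub] by blast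

lemma card_R: "(\<forall>k. C (gda_Y X C P k) \<noteq> gda_Y X C P k) \<Longrightarrow> k \<le> card (gda_R X C P k)"
proof (induction k)
  case 0 then show ?case by simp
next
  case (Suc k)
  have ne: "gda_Y X C P k - C (gda_Y X C P k) \<noteq> {}" using Suc.prems C_sub[of "gda_Y X C P k"] by blast
  have dj: "gda_Y X C P k \<inter> gda_R X C P k = {}" using Y_sub by blast
  have ps: "gda_R X C P k \<subset> gda_R X C P (Suc k)" unfolding R_Suc using ne dj by blast
  have "finite (gda_R X C P (Suc k))" using R_sub finX by (rule finite_subset)
  then have "card (gda_R X C P k) < card (gda_R X C P (Suc k))" using ps by (rule psubset_card_mono)
  then show ?case using Suc by simp
qed

lemma term_ex: "\<exists>k. C (gda_Y X C P k) = gda_Y X C P k"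
proof (rule ccontr)
  assume a: "\<not> ?thesis"
  have "Suc (card X) \<le> card (gda_R X C P (Suc (card X)))" using card_R a by blast
  moreover have "card (gda_R X C P (Suc (card X))) \<le> card X" using R_sub finX by (rule card_mono[rotated])
  ultimately show False by simp
qed

definition Kf :: "('d,'h) profile \<Rightarrow> nat" where
  "Kf P = (LEAST k. gda_Y X C P k = C (gda_Y X C P k))"

definition Rf :: "('d,'h) profile \<Rightarrow> ('d,'h) contract set" where
  "Rf P = gda_R X C P (Kf P)"

lemma out_def: "gda X C P = gda_Y X C P (Kf P)"
  unfolding gda_def Kf_def by simp

lemma out_fix: "C (gda X C P) = gda X C P"
proof -
  have "\<exists>k. gda_Y X C P k = C (gda_Y X C P k)" using term_ex by metis
  then have "gda_Y X C P (Kf P) = C (gda_Y X C P (Kf P))" unfolding Kf_def by (rule LeastI_ex)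
  then show ?thesis unfolding out_def by simp
qed

lemma out_CD: "gda X C P = Ch_D P (X - Rf P)"
  unfolding out_def Rf_def gda_Y_def ..

lemma out_CYR: "C (gda X C P \<union> Rf P) = gda X C P"
  using C_Y_eq[of P "Kf P"] out_fix unfolding out_def Rf_def by simp

lemma out_sub: "gda X C P \<subseteq> X - Rf P"
  unfolding out_def Rf_def by (rule Y_sub)

lemma out_X: "gda X C P \<subseteq> X" using out_sub by blast

lemma Rf_X: "Rf P \<subseteq> X" unfolding Rf_def by (rule R_sub)

lemma out_best:
  assumes v: "valid_profile D X P" and z: "z \<in> X - Rf P" "P (doc z) (Some z) None"
  shows "\<exists>y\<in>gda X C P. doc y = doc z \<and> (y = z \<or> P (doc z) (Some y) (Some z))"
proof -
  obtain y where y: "y \<in> Ch_D P (X - Rf P)" "doc y = doc z"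
    using CD_ex[OF v _ z] by blast
  have "y = z \<or> P (doc z) (Some y) (Some z)"
    using CD_best[OF y(1) z(1)] y(2) by auto
  then show ?thesis using y out_CD by auto
qed

end

context chsys
begin

lemma vp_doc: "valid_profile D X P \<Longrightarrow> z \<in> X \<Longrightarrow> valid_pref X (doc z) (P (doc z))"
  by (rule vpd)

lemma asym_doc:
  assumes v: "valid_profile D X P" and zX: "z \<in> X" "y \<in> X" "doc y = doc z"
    and r: "P (doc z) (Some z) (Some y)" "P (doc z) (Some y) (Some z)"
  shows False
proof -
  have d: "Some z \<in> dom_d X (doc z)" "Some y \<in> dom_d X (doc z)" using zX by simp_all
  show False using vp_asym[OF vpd[OF v zX(1)] d r(1)] r(2) by simp
qed

lemma DA_hstable:
  assumes v: "valid_profile D X P"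
  shows "hstable X C P (gda X C P)"
  unfolding hstable_def
proof (intro conjI allI impI)
  let ?Y = "gda X C P"
  show "?Y \<subseteq> X" by (rule out_X)
  show "Ch_D P ?Y = ?Y" using out_CD CD_idem by metis
  show "C ?Y = ?Y" by (rule out_fix)
  fix Z assume Z: "Z \<subseteq> X" "Z \<noteq> {}" "Z \<inter> ?Y = {}" "Z \<subseteq> C (?Y \<union> Z)"
  show "\<not> Z \<subseteq> Ch_D P (?Y \<union> Z)"
  proof
    assume ZD: "Z \<subseteq> Ch_D P (?Y \<union> Z)"
    have ZR: "Z \<subseteq> Rf P"
    proof
      fix z assume zZ: "z \<in> Z"
      show "z \<in> Rf P"
      proof (rule ccontr)
        assume "z \<notin> Rf P"
        then have zXR: "z \<in> X - Rf P" using Z zZ by blast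
        have zc: "z \<in> Ch_D P (?Y \<union> Z)" using ZD zZ by blast
        obtain y where y: "y \<in> ?Y" "doc y = doc z" "y = z \<or> P (doc z) (Some y) (Some z)"
          using out_best[OF v zXR CD_acc[OF zc]] by blast
        have yz: "y \<noteq> z" using y(1) zZ Z(3) by blast
        have r1: "P (doc z) (Some y) (Some z)" using y(3) yz by simp
        have r2: "P (doc z) (Some z) (Some y)" using CD_best[OF zc _ y(2) yz] y(1) by blast
        show False using asym_doc[OF v _ _ y(2) r2 r1] zXR y(1) out_X by blast
      qed
    qed
    have "C (?Y \<union> Z) = C (?Y \<union> Rf P)"
      by (rule irc) (use out_CYR ZR Rf_X out_X in auto)
    then have "C (?Y \<union> Z) = ?Y" using out_CYR by simp
    then show False using Z by blast
  qed
qed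

lemma no_reject:
  assumes v: "valid_profile D X P" and st: "hstable X C P Y'"
  shows "Y' \<inter> gda_R X C P k = {}"
proof (induction k)
  case 0 then show ?case by simp
next
  case (Suc k)
  let ?Yk = "gda_Y X C P k" and ?R = "gda_R X C P k"
  have Y'X: "Y' \<subseteq> X" and Y'D: "Ch_D P Y' = Y'" and Y'C: "C Y' = Y'"
    and nb: "\<And>Z. Z \<subseteq> X \<Longrightarrow> Z \<noteq> {} \<Longrightarrow> Z \<inter> Y' = {} \<Longrightarrow> Z \<subseteq> C (Y' \<union> Z) \<Longrightarrow> \<not> Z \<subseteq> Ch_D P (Y' \<union> Z)"
    using st unfolding hstable_def by blast+
  have YkX: "?Yk \<subseteq> X - ?R" by (rule Y_sub)
  have "Y' \<inter> (?Yk - C ?Yk) = {}"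
  proof (rule ccontr)
    assume "Y' \<inter> (?Yk - C ?Yk) \<noteq> {}"
    then obtain x where x: "x \<in> Y'" "x \<in> ?Yk" "x \<notin> C ?Yk" by blast
    define S where "S = ?Yk \<union> Y'"
    have SX: "S \<subseteq> X" unfolding S_def using YkX Y'X by blast
    have xS: "x \<notin> C S" using subst[of ?Yk S] SX x unfolding S_def by blast
    define Z where "Z = C S - Y'"
    have CS: "C S \<subseteq> S" by (rule C_sub)
    have ZX: "Z \<subseteq> X" unfolding Z_def using CS SX by blast
    have Zd: "Z \<inter> Y' = {}" unfolding Z_def by blast
    have CZ: "C (Y' \<union> Z) = C S"
      by (rule irc) (use CS SX in \<open>auto simp: Z_def S_def\<close>)
    have ZC: "Z \<subseteq> C (Y' \<union> Z)"
    proof -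
      have "Z \<subseteq> C S" unfolding Z_def by blast
      then show ?thesis using CZ by simp
    qed
    have ZYk: "Z \<subseteq> ?Yk" unfolding Z_def using CS unfolding S_def by blast
    have ZD: "Z \<subseteq> Ch_D P (Y' \<union> Z)"
    proof
      fix z assume zZ: "z \<in> Z"
      have zc: "z \<in> Ch_D P (X - ?R)" using ZYk zZ unfolding gda_Y_def by blast
      show "z \<in> Ch_D P (Y' \<union> Z)"
        unfolding CD_iff
      proof (intro conjI ballI impI)
        show "z \<in> Y' \<union> Z" using zZ by blast
        show "P (doc z) (Some z) None" by (rule CD_acc[OF zc])
        fix w assume w: "w \<in> Y' \<union> Z" "doc w = doc z \<and> w \<noteq> z"
        show "P (doc z) (Some z) (Some w)"
        proof (cases "w \<in> Y'")
          case True
          then have "w \<in> X - ?R" using Y'X Suc.IH by blast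
          then show ?thesis using CD_best[OF zc] w by blast
        next
          case False
          then have "w \<in> ?Yk" using w ZYk by blast
          then have "w = z" using CD_uniq[OF v _ _ zc] w(2) zZ unfolding gda_Y_def by blast
          then show ?thesis using w by blast
        qed
      qed
    qed
    have "Z \<noteq> {}"
    proof
      assume "Z = {}"
      then have "C S \<subseteq> Y'" unfolding Z_def by blast
      then have "C Y' = C S" by (rule irc) (use SX in \<open>auto simp: S_def\<close>)
      then show False using Y'C x xS by simp
    qed
    then show False using nb[OF ZX _ Zd ZC] ZD by blast
  qed
  then show ?case using Suc.IH unfolding R_Suc by blast
qed

lemma dopt:
  assumes v: "valid_profile D X P" and st: "hstable X C P Y'" and y': "y' \<in> Y'"
  shows "\<exists>y\<in>gda X C P. doc y = doc y' \<and> (y = y' \<or> P (doc y') (Some y) (Some y'))"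
proof -
  have Y'X: "Y' \<subseteq> X" and Y'D: "Ch_D P Y' = Y'" using st unfolding hstable_def by blast+
  have "y' \<in> X - Rf P" using no_reject[OF v st, of "Kf P"] y' Y'X unfolding Rf_def by blast
  moreover have "P (doc y') (Some y') None" using CD_acc[of y' P Y'] Y'D y' by simp
  ultimately show ?thesis by (rule out_best[OF v])
qed

lemma hosp_pess:
  assumes v: "valid_profile D X P" and st: "hstable X C P Y'"
  shows "C (gda X C P \<union> Y') = Y'"
proof -
  let ?Y = "gda X C P"
  have Y'X: "Y' \<subseteq> X" and Y'D: "Ch_D P Y' = Y'" and Y'C: "C Y' = Y'"
    and nb: "\<And>Z. Z \<subseteq> X \<Longrightarrow> Z \<noteq> {} \<Longrightarrow> Z \<inter> Y' = {} \<Longrightarrow> Z \<subseteq> C (Y' \<union> Z) \<Longrightarrow> \<not> Z \<subseteq> Ch_D P (Y' \<union> Z)"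
    using st unfolding hstable_def by blast+
  define S where "S = ?Y \<union> Y'"
  have SX: "S \<subseteq> X" unfolding S_def using out_X Y'X by blast
  define Z where "Z = C S - Y'"
  have CS: "C S \<subseteq> S" by (rule C_sub)
  have ZX: "Z \<subseteq> X" unfolding Z_def using CS SX by blast
  have Zd: "Z \<inter> Y' = {}" unfolding Z_def by blast
  have CZ: "C (Y' \<union> Z) = C S"
    by (rule irc) (use CS SX in \<open>auto simp: Z_def S_def\<close>)
  have ZC: "Z \<subseteq> C (Y' \<union> Z)"
    proof -
      have "Z \<subseteq> C S" unfolding Z_def by blast
      then show ?thesis using CZ by simp
    qed
  have ZY: "Z \<subseteq> ?Y" unfolding Z_def using CS unfolding S_def by blast
  have nr: "Y' \<inter> Rf P = {}" using no_reject[OF v st] unfolding Rf_def by blast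
  have ZD: "Z \<subseteq> Ch_D P (Y' \<union> Z)"
  proof
    fix z assume zZ: "z \<in> Z"
    have zc: "z \<in> Ch_D P (X - Rf P)" using ZY zZ out_CD by blast
    show "z \<in> Ch_D P (Y' \<union> Z)"
      unfolding CD_iff
    proof (intro conjI ballI impI)
      show "z \<in> Y' \<union> Z" using zZ by blast
      show "P (doc z) (Some z) None" by (rule CD_acc[OF zc])
      fix w assume w: "w \<in> Y' \<union> Z" "doc w = doc z \<and> w \<noteq> z"
      show "P (doc z) (Some z) (Some w)"
      proof (cases "w \<in> Y'")
        case True
        then have "w \<in> X - Rf P" using Y'X nr by blast
        then show ?thesis using CD_best[OF zc] w by blast
      next
        case False
        then have "w \<in> Ch_D P (X - Rf P)" using w ZY out_CD by blast
        then have "w = z" using CD_uniq[OF v _ _ zc] w(2) by blast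
        then show ?thesis using w by blast
      qed
    qed
  qed
  have "Z = {}" using nb[OF ZX _ Zd ZC] ZD by blast
  then have "C S \<subseteq> Y'" unfolding Z_def by blast
  then have "C Y' = C S" by (rule irc) (use SX in \<open>auto simp: S_def\<close>)
  then show ?thesis using Y'C unfolding S_def by simp
qed

lemma rural:
  assumes v: "valid_profile D X P" and st: "hstable X C P Y'" and y: "y \<in> gda X C P"
  shows "\<exists>y'\<in>Y'. doc y' = doc y"
proof -
  let ?Y = "gda X C P"
  have Y'X: "Y' \<subseteq> X" and Y'D: "Ch_D P Y' = Y'"
    using st unfolding hstable_def by blast+
  have SX: "?Y \<union> Y' \<subseteq> X" using out_X Y'X by blast
  have c1: "card ?Y \<le> card Y'"
    using lad[of ?Y "?Y \<union> Y'"] SX hosp_pess[OF v st] out_fix by simp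
  have i1: "inj_on doc Y'"
  proof (rule inj_onI)
    fix a b assume "a \<in> Y'" "b \<in> Y'" "doc a = doc b"
    then show "a = b" using CD_uniq[OF v Y'X, of a b] Y'D by simp
  qed
  have i2: "inj_on doc ?Y"
  proof (rule inj_onI)
    fix a b assume "a \<in> ?Y" "b \<in> ?Y" "doc a = doc b"
    then show "a = b" using CD_uniq[OF v _ _ _, of "X - Rf P" a b] out_CD by auto
  qed
  have sub: "doc ` Y' \<subseteq> doc ` ?Y"
  proof
    fix d assume "d \<in> doc ` Y'"
    then obtain y' where y': "y' \<in> Y'" "d = doc y'" by blast
    then obtain y where "y \<in> ?Y" "doc y = doc y'" using dopt[OF v st] by blast
    then show "d \<in> doc ` ?Y" using y' by (metis image_eqI)
  qed
  have fin: "finite (doc ` ?Y)" using out_X finX by (meson finite_imageI finite_subset)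
  have "card (doc ` ?Y) \<le> card (doc ` Y')" using c1 card_image[OF i1] card_image[OF i2] by simp
  then have "doc ` Y' = doc ` ?Y" using card_subset_eq[OF fin sub] by (metis card_mono fin le_antisym sub)
  then show ?thesis using y by (metis image_eqI imageE)
qed

end

definition trunc :: "('d,'h) pref \<Rightarrow> ('d,'h) contract \<Rightarrow> ('d,'h) pref" where
  "trunc p x a b \<longleftrightarrow> (a \<noteq> None \<and> b \<noteq> None \<and> p a b) \<or> (a \<noteq> None \<and> b = None \<and> (a = Some x \<or> p a (Some x)))
      \<or> (a = None \<and> b \<noteq> None \<and> p (Some x) b)"

definition only :: "('d,'h) contract \<Rightarrow> ('d,'h) pref \<Rightarrow> ('d,'h) pref" where
  "only x p a b \<longleftrightarrow> (a = Some x \<and> b \<noteq> Some x) \<or> (a = None \<and> b \<noteq> None \<and> b \<noteq> Some x)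
      \<or> (a \<noteq> None \<and> a \<noteq> Some x \<and> b \<noteq> None \<and> b \<noteq> Some x \<and> p a b)"

lemma trunc_SN: "trunc p x (Some z) None \<longleftrightarrow> z = x \<or> p (Some z) (Some x)"
  unfolding trunc_def by blast
lemma trunc_SS: "trunc p x (Some z) (Some u) \<longleftrightarrow> p (Some z) (Some u)"
  unfolding trunc_def by blast
lemma only_SN: "only x p (Some z) None \<longleftrightarrow> z = x"
  unfolding only_def by blast

lemma trunc_valid:
  assumes vp: "valid_pref X d p" and xd: "Some x \<in> dom_d X d"
  shows "valid_pref X d (trunc p x)"
proof -
  have "strict_order_on (dom_d X d) (trunc p x)"
    unfolding strict_order_on_def
  proof (intro conjI ballI impI)
    fix a assume a: "a \<in> dom_d X d"
    show "\<not> trunc p x a a"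
    proof (cases a)
      case None then show ?thesis by (simp add: trunc_def)
    next
      case (Some u) then show ?thesis using vp_irr[OF vp a] by (simp add: trunc_def)
    qed
  next
    fix a b c assume d: "a \<in> dom_d X d" "b \<in> dom_d X d" "c \<in> dom_d X d" and r: "trunc p x a b" "trunc p x b c"
    note tr = vp_trans[OF vp] and as = vp_asym[OF vp] and ir = vp_irr[OF vp]
    show "trunc p x a c"
    proof (cases "a = None")
      case aN: True
      then have b: "b \<noteq> None" "p (Some x) b" using r(1) by (auto simp: trunc_def)
      show ?thesis
      proof (cases "c = None")
        case True
        then have "b = Some x \<or> p b (Some x)" using r(2) b by (simp add: trunc_def)
        then show ?thesis
        proof
          assume "b = Some x" then show ?thesis using b ir[OF xd] by simp
        next
          assume "p b (Some x)" then show ?thesis using b as[OF xd d(2)] by simp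
        qed
      next
        case False
        then have "p b c" using r(2) b unfolding trunc_def by blast
        then have "p (Some x) c" using tr[OF xd d(2) d(3) b(2)] by simp
        then show ?thesis using aN False by (simp add: trunc_def)
      qed
    next
      case aS: False
      show ?thesis
      proof (cases "b = None")
        case bN: True
        have a1: "a = Some x \<or> p a (Some x)" using r(1) aS bN by (simp add: trunc_def)
        have c1: "c \<noteq> None" "p (Some x) c" using r(2) bN by (auto simp: trunc_def)
        have "p a c"
        proof (cases "a = Some x")
          case True then show ?thesis using c1 by simp
        next
          case False then show ?thesis using a1 tr[OF d(1) xd d(3) _ c1(2)] by simp
        qed
        then show ?thesis using aS c1 by (simp add: trunc_def)
      next
        case bS: False
        have ab: "p a b" using r(1) aS bS by (simp add: trunc_def)
        show ?thesis
        proof (cases "c = None")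
          case True
          then have "b = Some x \<or> p b (Some x)" using r(2) bS by (simp add: trunc_def)
          then have "p a (Some x)"
          proof
            assume "b = Some x" then show ?thesis using ab by simp
          next
            assume "p b (Some x)" then show ?thesis using tr[OF d(1) d(2) xd ab] by simp
          qed
          then show ?thesis using aS True by (simp add: trunc_def)
        next
          case False
          then have "p b c" using r(2) bS unfolding trunc_def by blast
          then show ?thesis using tr[OF d ab] aS False by (simp add: trunc_def)
        qed
      qed
    qed
  next
    fix a b assume d: "a \<in> dom_d X d" "b \<in> dom_d X d" "a \<noteq> b"
    show "trunc p x a b \<or> trunc p x b a"
    proof (cases "a = None")
      case True
      then have bN: "b \<noteq> None" using d by simp
      show ?thesis
      proof (cases "b = Some x")
        case True then show ?thesis using bN \<open>a = None\<close> by (simp add: trunc_def)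
      next
        case False
        then have "p (Some x) b \<or> p b (Some x)" using vp_tot[OF vp xd d(2)] by simp
        then show ?thesis using bN \<open>a = None\<close> by (auto simp: trunc_def)
      qed
    next
      case False
      show ?thesis
      proof (cases "b = None")
        case True
        show ?thesis
        proof (cases "a = Some x")
          case True then show ?thesis using \<open>b = None\<close> by (simp add: trunc_def)
        next
          case ax: False
          then have "p (Some x) a \<or> p a (Some x)" using vp_tot[OF vp xd d(1)] by simp
          then show ?thesis using \<open>b = None\<close> False by (auto simp: trunc_def)
        qed
      next
        case bS: False
        then show ?thesis using vp_tot[OF vp d] False by (auto simp: trunc_def)
      qed
    qed
  qed
  then show ?thesis unfolding valid_pref_def dom_d_def .
qed

lemma only_valid:
  assumes vp: "valid_pref X d p"
  shows "valid_pref X d (only x p)"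
proof -
  have "strict_order_on (dom_d X d) (only x p)"
    unfolding strict_order_on_def
  proof (intro conjI ballI impI)
    fix a assume a: "a \<in> dom_d X d"
    show "\<not> only x p a a" using vp_irr[OF vp a] by (auto simp: only_def)
  next
    fix a b c assume d: "a \<in> dom_d X d" "b \<in> dom_d X d" "c \<in> dom_d X d" and r: "only x p a b" "only x p b c"
    show "only x p a c"
    proof (cases "a = Some x")
      case True then show ?thesis using r by (auto simp: only_def)
    next
      case ax: False
      show ?thesis
      proof (cases "a = None")
        case True then show ?thesis using r ax by (auto simp: only_def)
      next
        case False
        then have "b \<noteq> None" "b \<noteq> Some x" "p a b" using r(1) ax by (auto simp: only_def)
        moreover then have "c \<noteq> None" "c \<noteq> Some x" "p b c" using r(2) by (auto simp: only_def)
        ultimately show ?thesis using vp_trans[OF vp d] ax False by (simp add: only_def)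
      qed
    qed
  next
    fix a b assume d: "a \<in> dom_d X d" "b \<in> dom_d X d" "a \<noteq> b"
    show "only x p a b \<or> only x p b a"
    proof (cases "a = Some x \<or> b = Some x \<or> a = None \<or> b = None")
      case True
      show ?thesis
      proof (cases "a = Some x")
        case True then show ?thesis using d(3) by (simp add: only_def)
      next
        case F1: False
        show ?thesis
        proof (cases "b = Some x")
          case True then show ?thesis using F1 by (simp add: only_def)
        next
          case F2: False
          show ?thesis
          proof (cases "a = None")
            case True then have "b \<noteq> None" using d(3) by simp
            then show ?thesis using True F2 by (simp add: only_def)
          next
            case F3: False
            then have "b = None" using \<open>a = Some x \<or> b = Some x \<or> a = None \<or> b = None\<close> F1 F2 F3 by blast
            then show ?thesis using F1 F3 by (simp add: only_def)
          qed
        qed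
      qed
    next
      case False then show ?thesis using vp_tot[OF vp d] by (auto simp: only_def)
    qed
  qed
  then show ?thesis unfolding valid_pref_def dom_d_def .
qed

lemma outcome_Some:
  assumes "\<forall>u\<in>Y. \<forall>v\<in>Y. doc u = doc v \<longrightarrow> u = v" "y \<in> Y"
  shows "outcome Y (doc y) = Some y"
proof -
  have "(THE x. x \<in> Y \<and> doc x = doc y) = y"
    using assms by (intro the_equality) auto
  then show ?thesis unfolding outcome_def using assms(2) by auto
qed

lemma outcome_None: "\<not> (\<exists>x\<in>Y. doc x = d) \<Longrightarrow> outcome Y d = None"
  unfolding outcome_def by auto

lemma CD_local: "P1 (doc z) = P2 (doc z) \<Longrightarrow> z \<in> Ch_D P1 A \<longleftrightarrow> z \<in> Ch_D P2 A"
  unfolding CD_iff by simp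

lemma hstable_transfer:
  assumes "hstable X C P1 Y" "Ch_D P2 Y = Y"
    "\<And>Z. Z \<subseteq> X \<Longrightarrow> Z \<inter> Y = {} \<Longrightarrow> Z \<subseteq> Ch_D P2 (Y \<union> Z) \<Longrightarrow> Z \<subseteq> Ch_D P1 (Y \<union> Z)"
  shows "hstable X C P2 Y"
proof -
  have h: "Y \<subseteq> X" "C Y = Y"
    "\<And>Z. Z \<subseteq> X \<Longrightarrow> Z \<noteq> {} \<Longrightarrow> Z \<inter> Y = {} \<Longrightarrow> Z \<subseteq> C (Y \<union> Z) \<Longrightarrow> \<not> Z \<subseteq> Ch_D P1 (Y \<union> Z)"
    using assms(1) unfolding hstable_def by blast+
  show ?thesis unfolding hstable_def
  proof (intro conjI allI impI)
    show "Y \<subseteq> X" "Ch_D P2 Y = Y" "C Y = Y" using h(1,2) assms(2) by simp_all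
    fix Z assume Z: "Z \<subseteq> X" "Z \<noteq> {}" "Z \<inter> Y = {}" "Z \<subseteq> C (Y \<union> Z)"
    show "\<not> Z \<subseteq> Ch_D P2 (Y \<union> Z)"
    proof
      assume "Z \<subseteq> Ch_D P2 (Y \<union> Z)"
      then have "Z \<subseteq> Ch_D P1 (Y \<union> Z)" using assms(3) Z(1,3) by blast
      then show False using h(3)[OF Z] by blast
    qed
  qed
qed

lemma vprof_upd: "valid_profile D X P \<Longrightarrow> valid_pref X d p \<Longrightarrow> valid_profile D X (P(d := p))"
  unfolding valid_profile_def by simp

context chsys
begin

lemma out_uniq: "valid_profile D X P \<Longrightarrow> \<forall>u\<in>gda X C P. \<forall>v\<in>gda X C P. doc u = doc v \<longrightarrow> u = v"
proof (intro ballI impI)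
  fix u v assume v: "valid_profile D X P" and uv: "u \<in> gda X C P" "v \<in> gda X C P" "doc u = doc v"
  have s: "X - Rf P \<subseteq> X" by blast
  show "u = v" using CD_uniq[OF v s _ _ uv(3)] uv(1,2) unfolding out_CD by blast
qed

lemma out_cases:
  assumes v: "valid_profile D X P"
  shows "(outcome (gda X C P) d = None \<and> \<not> (\<exists>y\<in>gda X C P. doc y = d)) \<or>
         (\<exists>y\<in>gda X C P. doc y = d \<and> outcome (gda X C P) d = Some y)"
proof (cases "\<exists>y\<in>gda X C P. doc y = d")
  case True
  then obtain y where y: "y \<in> gda X C P" "doc y = d" by blast
  have "outcome (gda X C P) d = Some y" using outcome_Some[OF out_uniq[OF v] y(1)] y(2) by simp
  then show ?thesis using y by blast
next
  case False then show ?thesis using outcome_None[OF False] by simp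
qed

lemma out_acc: "y \<in> gda X C P \<Longrightarrow> P (doc y) (Some y) None"
  by (rule CD_acc[of y P "X - Rf P"]) (simp add: out_CD[symmetric])

lemma out_dom: assumes v: "valid_profile D X P" shows "outcome (gda X C P) d \<in> dom_d X d"
proof (cases "outcome (gda X C P) d = None")
  case True then show ?thesis by simp
next
  case False
  have "\<exists>y\<in>gda X C P. doc y = d \<and> outcome (gda X C P) d = Some y"
    using out_cases[OF v, of d] False by (meson)
  then obtain y where y: "y \<in> gda X C P" "doc y = d" "outcome (gda X C P) d = Some y"
    by blast
  have "y \<in> X" using y(1) out_X by blast
  then show ?thesis using y by simp
qed

theorem DA_sp: "strategy_proof D X (gda X C)"
  unfolding strategy_proof_def Let_def
proof (intro allI impI)
  fix P d p'
  assume v: "valid_profile D X P" and dD: "d \<in> D" and vp': "valid_pref X d p'"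
  define P' where "P' = P(d := p')"
  have v': "valid_profile D X P'" unfolding P'_def using vprof_upd[OF v vp'] .
  have vpd: "valid_pref X d (P d)" using v dD unfolding valid_profile_def by blast
  let ?Y = "gda X C P" and ?Y' = "gda X C P'"
  let ?a = "outcome ?Y d" and ?b = "outcome ?Y' d"
  show "?a = ?b \<or> P d ?a ?b"
  proof (rule ccontr)
    assume nc: "\<not> (?a = ?b \<or> P d ?a ?b)"
    have da: "?a \<in> dom_d X d" by (rule out_dom[OF v])
    have db: "?b \<in> dom_d X d" by (rule out_dom[OF v'])
    have ba: "P d ?b ?a" using vp_tot[OF vpd da db] nc by blast
    have acc_a: "?a = None \<or> (\<exists>y\<in>?Y. doc y = d \<and> ?a = Some y \<and> P d (Some y) None)"
      using out_cases[OF v, of d] out_acc by blast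
    show False
    proof (cases "?b = None")
      case True
      then obtain y where y: "y \<in> ?Y" "doc y = d" "?a = Some y" "P d (Some y) None"
        using acc_a nc by auto
      have "Some y \<in> dom_d X d" using y out_X by auto
      then show False using vp_asym[OF vpd _ dom_None y(4)] ba True y(3) by simp
    next
      case False
      then have "\<exists>x\<in>?Y'. doc x = d \<and> ?b = Some x"
        using out_cases[OF v', of d] by meson
      then obtain x where x: "x \<in> ?Y'" "doc x = d" "?b = Some x" by blast
      have xX: "x \<in> X" using x out_X by blast
      have xd: "Some x \<in> dom_d X d" using xX x by simp
      have xa: "P d (Some x) ?a" using ba x by simp
      have xacc: "P d (Some x) None"
      proof (cases "?a = None")
        case True then show ?thesis using xa by simp
      next
        case False
        then have "\<exists>y\<in>?Y. doc y = d \<and> ?a = Some y \<and> P d (Some y) None" using acc_a by meson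
        then obtain y where y: "y \<in> ?Y" "doc y = d" "?a = Some y" "P d (Some y) None" by blast
        have yd: "Some y \<in> dom_d X d" using y out_X by auto
        have "P d (Some x) (Some y)" using xa y(3) by simp
        then show ?thesis using vp_trans[OF vpd xd yd dom_None] y(4) by simp
      qed
      define pT where "pT = trunc (P d) x"
      define PT where "PT = P(d := pT)"
      define pQ where "pQ = only x (P d)"
      define Q where "Q = P(d := pQ)"
      have vT: "valid_profile D X PT" unfolding PT_def pT_def by (rule vprof_upd[OF v trunc_valid[OF vpd xd]])
      have vQ: "valid_profile D X Q" unfolding Q_def pQ_def by (rule vprof_upd[OF v only_valid[OF vpd]])
      have PTo: "PT e = P e" "Q e = P e" "P' e = P e" if "e \<noteq> d" for e
        using that unfolding PT_def Q_def P'_def by simp_all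
      have PTd: "PT d = pT" "Q d = pQ" unfolding PT_def Q_def by simp_all
      define W where "W = gda X C PT"
      have stW: "hstable X C PT W" unfolding W_def by (rule DA_hstable[OF vT])
      have WX: "W \<subseteq> X" and WD: "Ch_D PT W = W" using stW unfolding hstable_def by blast+
      have Wu: "\<forall>u\<in>W. \<forall>v\<in>W. doc u = doc v \<longrightarrow> u = v" unfolding W_def by (rule out_uniq[OF vT])
      have onlyx: "z = x" if "pQ (Some z) None" for z
        using that unfolding pQ_def by (simp add: only_SN)
      have C1: "\<not> (\<exists>w\<in>W. doc w = d)"
      proof
        assume "\<exists>w\<in>W. doc w = d"
        then obtain w where w: "w \<in> W" "doc w = d" by blast
        have wX: "w \<in> X" using w WX by blast
        have wd: "Some w \<in> dom_d X d" using wX w by simp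
        have "pT (Some w) None" using out_acc[of w PT] w PTd unfolding W_def by simp
        then have wge: "w = x \<or> P d (Some w) (Some x)" unfolding pT_def by (simp add: trunc_SN trunc_SS)
        have wacc: "P d (Some w) None"
          using wge xacc vp_trans[OF vpd wd xd dom_None] by auto
        have stP: "hstable X C P W"
        proof (rule hstable_transfer[OF stW])
          show "Ch_D P W = W"
          proof
            show "Ch_D P W \<subseteq> W" by (rule CD_sub)
            show "W \<subseteq> Ch_D P W"
            proof
              fix z assume zW: "z \<in> W"
              show "z \<in> Ch_D P W"
              proof (cases "doc z = d")
                case False
                then show ?thesis using CD_local[of PT z P W] PTo zW WD by simp
              next
                case True
                then have zw: "z = w" using Wu zW w by blast
                show ?thesis unfolding CD_iff
                proof (intro conjI ballI impI)
                  show "z \<in> W" by (rule zW)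
                  show "P (doc z) (Some z) None" using wacc zw w by simp
                  fix u assume "u \<in> W" "doc u = doc z \<and> u \<noteq> z"
                  then show "P (doc z) (Some z) (Some u)" using Wu zW by blast
                qed
              qed
            qed
          qed
        next
          fix Z assume Z: "Z \<subseteq> X" "Z \<inter> W = {}" "Z \<subseteq> Ch_D P (W \<union> Z)"
          show "Z \<subseteq> Ch_D PT (W \<union> Z)"
          proof
            fix z assume zZ: "z \<in> Z"
            have zc: "z \<in> Ch_D P (W \<union> Z)" using Z zZ by blast
            show "z \<in> Ch_D PT (W \<union> Z)"
            proof (cases "doc z = d")
              case False
              then show ?thesis using CD_local[of PT z P] PTo zc by simp
            next
              case True
              have zX: "z \<in> X" using Z zZ by blast
              have zd: "Some z \<in> dom_d X d" using zX True by simp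
              have zw: "z \<noteq> w" using zZ w Z(2) by blast
              have "P d (Some z) (Some w)" using CD_best[OF zc, of w] w zw True by simp
              then have zx: "P d (Some z) (Some x)"
                using wge vp_trans[OF vpd zd wd xd] by auto
              show ?thesis unfolding CD_iff
              proof (intro conjI ballI impI)
                show "z \<in> W \<union> Z" using zZ by blast
                show "PT (doc z) (Some z) None" using True PTd zx unfolding pT_def by (simp add: trunc_SN trunc_SS)
                fix u assume u: "u \<in> W \<union> Z" "doc u = doc z \<and> u \<noteq> z"
                have "P d (Some z) (Some u)" using CD_best[OF zc u(1)] u(2) True by simp
                then show "PT (doc z) (Some z) (Some u)" using True PTd unfolding pT_def by (simp add: trunc_SN trunc_SS)
              qed
            qed
          qed
        qed
        obtain y where y: "y \<in> ?Y" "doc y = d" "y = w \<or> P d (Some y) (Some w)"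
          using dopt[OF v stP w(1)] w(2) by auto
        have "?a = Some y" using outcome_Some[OF out_uniq[OF v] y(1)] y(2) by simp
        then have xy: "P d (Some x) (Some y)" using xa by simp
        have yd: "Some y \<in> dom_d X d" using y out_X by auto
        have "y = x \<or> P d (Some y) (Some x)"
          using y(3) wge vp_trans[OF vpd yd wd xd] by auto
        then show False
        proof
          assume "y = x" then show False using xy vp_irr[OF vpd xd] by simp
        next
          assume "P d (Some y) (Some x)" then show False using xy vp_asym[OF vpd xd yd] by simp
        qed
      qed
      have stQW: "hstable X C Q W"
      proof (rule hstable_transfer[OF stW])
        show "Ch_D Q W = W"
        proof
          show "Ch_D Q W \<subseteq> W" by (rule CD_sub)
          show "W \<subseteq> Ch_D Q W"
          proof
            fix z assume zW: "z \<in> W"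
            then have "doc z \<noteq> d" using C1 by blast
            then show "z \<in> Ch_D Q W" using CD_local[of PT z Q W] PTo zW WD by simp
          qed
        qed
      next
        fix Z assume Z: "Z \<subseteq> X" "Z \<inter> W = {}" "Z \<subseteq> Ch_D Q (W \<union> Z)"
        show "Z \<subseteq> Ch_D PT (W \<union> Z)"
        proof
          fix z assume zZ: "z \<in> Z"
          have zc: "z \<in> Ch_D Q (W \<union> Z)" using Z zZ by blast
          show "z \<in> Ch_D PT (W \<union> Z)"
          proof (cases "doc z = d")
            case False
            then show ?thesis using CD_local[of PT z Q] PTo zc by simp
          next
            case True
            have zx: "z = x" using CD_acc[OF zc] True PTd onlyx by simp
            show ?thesis unfolding CD_iff
            proof (intro conjI ballI impI)
              show "z \<in> W \<union> Z" using zZ by blast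
              show "PT (doc z) (Some z) None" using True PTd zx unfolding pT_def by (simp add: trunc_SN trunc_SS)
              fix u assume u: "u \<in> W \<union> Z" "doc u = doc z \<and> u \<noteq> z"
              then have "u \<in> Z" using C1 True by blast
              then have "u \<in> Ch_D Q (W \<union> Z)" using Z by blast
              then have "u = x" using CD_acc[of u Q] u True PTd onlyx by simp
              then show "PT (doc z) (Some z) (Some u)" using u zx by simp
            qed
          qed
        qed
      qed
      have stP': "hstable X C P' ?Y'" by (rule DA_hstable[OF v'])
      have Y'u: "\<forall>u\<in>?Y'. \<forall>v\<in>?Y'. doc u = doc v \<longrightarrow> u = v" by (rule out_uniq[OF v'])
      have Y'D: "Ch_D P' ?Y' = ?Y'" using stP' unfolding hstable_def by blast
      have stQY': "hstable X C Q ?Y'"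
      proof (rule hstable_transfer[OF stP'])
        show "Ch_D Q ?Y' = ?Y'"
        proof
          show "Ch_D Q ?Y' \<subseteq> ?Y'" by (rule CD_sub)
          show "?Y' \<subseteq> Ch_D Q ?Y'"
          proof
            fix z assume zY: "z \<in> ?Y'"
            show "z \<in> Ch_D Q ?Y'"
            proof (cases "doc z = d")
              case False
              have e: "P' (doc z) = Q (doc z)" using PTo[OF False] by simp
              have "z \<in> Ch_D P' ?Y'" using zY Y'D by simp
              then show ?thesis using CD_local[of P' z Q, OF e] by simp
            next
              case True
              then have zx: "z = x" using Y'u zY x by blast
              show ?thesis unfolding CD_iff
              proof (intro conjI ballI impI)
                show "z \<in> ?Y'" by (rule zY)
                show "Q (doc z) (Some z) None" using True PTd zx unfolding pQ_def by (simp add: only_SN)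
                fix u assume "u \<in> ?Y'" "doc u = doc z \<and> u \<noteq> z"
                then show "Q (doc z) (Some z) (Some u)" using Y'u zY by blast
              qed
            qed
          qed
        qed
      next
        fix Z assume Z: "Z \<subseteq> X" "Z \<inter> ?Y' = {}" "Z \<subseteq> Ch_D Q (?Y' \<union> Z)"
        show "Z \<subseteq> Ch_D P' (?Y' \<union> Z)"
        proof
          fix z assume zZ: "z \<in> Z"
          have zc: "z \<in> Ch_D Q (?Y' \<union> Z)" using Z zZ by blast
          have "doc z \<noteq> d"
          proof
            assume dz: "doc z = d"
            then have "z = x" using CD_acc[OF zc] PTd onlyx by simp
            then show False using zZ x(1) Z(2) by blast
          qed
          then show "z \<in> Ch_D P' (?Y' \<union> Z)" using CD_local[of Q z P'] PTo zc by simp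
        qed
      qed
      obtain y where y: "y \<in> gda X C Q" "doc y = d"
        using dopt[OF vQ stQY' x(1)] x(2) by auto
      obtain w where w: "w \<in> W" "doc w = doc y" using rural[OF vQ stQW y(1)] by blast
      have "doc w = d" using w(2) y(2) by simp
      then show False using C1 w(1) by blast
    qed
  qed
qed

end

lemma greedy_ChH_eq:
  assumes "\<forall>h\<in>H. gr ord (B h)"
  shows "greedy_ChH H B ord A = (\<Union>h\<in>H. GC ord (B h) (contracts_of_hosp A h))"
  unfolding greedy_ChH_def
proof (rule SUP_cong[OF refl])
  fix h assume "h \<in> H"
  then have "gr ord (B h)" using assms by simp
  then show "greedy_choice ord (B h) (contracts_of_hosp A h) = GC ord (B h) (contracts_of_hosp A h)"
    by (rule gr.g_eq)
qed

lemma coh_sub: "contracts_of_hosp A h \<subseteq> A" unfolding contracts_of_hosp_def by blast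

lemma GC_hosp: assumes "gr ord b" "x \<in> GC ord b (contracts_of_hosp A h)" shows "hosp x = h \<and> x \<in> A"
proof -
  have "x \<in> contracts_of_hosp A h" using gr.GC_sub[OF assms(1)] assms(2) by blast
  then show ?thesis unfolding contracts_of_hosp_def by simp
qed

lemma hosp_C:
  assumes g: "\<forall>h\<in>H. gr ord (B h)" and h: "h \<in> H"
  shows "contracts_of_hosp (greedy_ChH H B ord A) h = GC ord (B h) (contracts_of_hosp A h)"
proof
  show "contracts_of_hosp (greedy_ChH H B ord A) h \<subseteq> GC ord (B h) (contracts_of_hosp A h)"
  proof
    fix x assume x: "x \<in> contracts_of_hosp (greedy_ChH H B ord A) h"
    then obtain h' where h': "h' \<in> H" "x \<in> GC ord (B h') (contracts_of_hosp A h')"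
      unfolding greedy_ChH_eq[OF g] contracts_of_hosp_def by blast
    have gh': "gr ord (B h')" using g h'(1) by simp
    have e1: "hosp x = h'" using GC_hosp[OF gh' h'(2)] by (rule conjunct1)
    have e2: "hosp x = h" using x unfolding contracts_of_hosp_def by blast
    have e: "h' = h" using e1 e2 by argo
    have "x \<in> GC ord (B h') (contracts_of_hosp A h')" by (rule h'(2))
    then show "x \<in> GC ord (B h) (contracts_of_hosp A h)" by (simp only: e)
  qed
  show "GC ord (B h) (contracts_of_hosp A h) \<subseteq> contracts_of_hosp (greedy_ChH H B ord A) h"
  proof
    fix x assume x: "x \<in> GC ord (B h) (contracts_of_hosp A h)"
    have gh: "gr ord (B h)" using g h by simp
    have hx: "hosp x = h" using GC_hosp[OF gh x] by (rule conjunct1)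
    have "x \<in> greedy_ChH H B ord A" unfolding greedy_ChH_eq[OF g] by (rule UN_I[where B="\<lambda>h. GC ord (B h) (contracts_of_hosp A h)", OF h x])
    then show "x \<in> contracts_of_hosp (greedy_ChH H B ord A) h"
      unfolding contracts_of_hosp_def using hx by simp
  qed
qed

lemma greedy_chsys:
  assumes m: "market D H X B" and dist: "distinct ord" and so: "set ord = X"
  shows "chsys D X (greedy_ChH H B ord)"
proof -
  have finH: "finite H" and finX: "finite X" and mX: "\<forall>x\<in>X. doc x \<in> D \<and> hosp x \<in> H \<and> 0 < wage x \<and> wage x \<le> B (hosp x)"
    and Bp: "\<forall>h\<in>H. B h > 0" using m unfolding market_def by blast+
  have g: "\<forall>h\<in>H. gr ord (B h)"
  proof
    fix h assume "h \<in> H"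
    then show "gr ord (B h)" using dist so mX Bp by (unfold_locales) auto
  qed
  let ?C = "greedy_ChH H B ord"
  show ?thesis
  proof
    show "finite X" by (rule finX)
    show "\<forall>x\<in>X. doc x \<in> D" using mX by blast
    fix A
    show "?C A \<subseteq> A"
    proof
      fix x assume "x \<in> ?C A"
      then obtain h where h: "h \<in> H" "x \<in> GC ord (B h) (contracts_of_hosp A h)"
        unfolding greedy_ChH_eq[OF g] by blast
      have gh: "gr ord (B h)" using g h(1) by simp
      show "x \<in> A" using GC_hosp[OF gh h(2)] by (rule conjunct2)
    qed
  next
    fix A B' assume AB: "A \<subseteq> B'" "B' \<subseteq> X"
    show "A \<inter> ?C B' \<subseteq> ?C A"
    proof
      fix x assume x: "x \<in> A \<inter> ?C B'"
      then obtain h where h: "h \<in> H" "x \<in> GC ord (B h) (contracts_of_hosp B' h)"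
        unfolding greedy_ChH_eq[OF g] by blast
      have gh: "gr ord (B h)" using g h(1) by simp
      have hx: "hosp x = h" using GC_hosp[OF gh h(2)] by (rule conjunct1)
      have "contracts_of_hosp A h \<subseteq> contracts_of_hosp B' h" using AB unfolding contracts_of_hosp_def by blast
      moreover have "x \<in> contracts_of_hosp A h" using x hx unfolding contracts_of_hosp_def by simp
      ultimately have "x \<in> GC ord (B h) (contracts_of_hosp A h)" by (rule gr.GC_subst[OF gh _ _ h(2)])
      then show "x \<in> ?C A" unfolding greedy_ChH_eq[OF g] by (rule UN_I[where B="\<lambda>h. GC ord (B h) (contracts_of_hosp A h)", OF h(1)])
    qed
  next
    fix A B' assume AB: "A \<subseteq> B'" "B' \<subseteq> X"
    have cardC: "card (?C E) = (\<Sum>h\<in>H. card (GC ord (B h) (contracts_of_hosp E h)))" for E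
      unfolding greedy_ChH_eq[OF g]
    proof (rule card_UN_disjoint[OF finH])
      show "\<forall>h\<in>H. finite (GC ord (B h) (contracts_of_hosp E h))"
      proof
        fix h assume "h \<in> H"
        then have gh: "gr ord (B h)" using g by simp
        have "GC ord (B h) (contracts_of_hosp E h) \<subseteq> set ord" using gr.GC_sub[OF gh] by blast
        then show "finite (GC ord (B h) (contracts_of_hosp E h))" by (rule finite_subset) simp
      qed
      show "\<forall>i\<in>H. \<forall>j\<in>H. i \<noteq> j \<longrightarrow> GC ord (B i) (contracts_of_hosp E i) \<inter> GC ord (B j) (contracts_of_hosp E j) = {}"
      proof (intro ballI impI)
        fix i j assume ij: "i \<in> H" "j \<in> H" "i \<noteq> j"
        have gi: "gr ord (B i)" "gr ord (B j)" using g ij by simp_all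
        show "GC ord (B i) (contracts_of_hosp E i) \<inter> GC ord (B j) (contracts_of_hosp E j) = {}"
        proof (rule equals0I)
          fix y assume "y \<in> GC ord (B i) (contracts_of_hosp E i) \<inter> GC ord (B j) (contracts_of_hosp E j)"
          then have "hosp y = i" "hosp y = j" using GC_hosp[OF gi(1), of y E i] GC_hosp[OF gi(2), of y E j] by auto
          then show False using ij(3) by simp
        qed
      qed
    qed
    have "(\<Sum>h\<in>H. card (GC ord (B h) (contracts_of_hosp A h))) \<le> (\<Sum>h\<in>H. card (GC ord (B h) (contracts_of_hosp B' h)))"
    proof (rule sum_mono)
      fix h assume h: "h \<in> H"
      have "contracts_of_hosp A h \<subseteq> contracts_of_hosp B' h" using AB unfolding contracts_of_hosp_def by blast
      then show "card (GC ord (B h) (contracts_of_hosp A h)) \<le> card (GC ord (B h) (contracts_of_hosp B' h))"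
        using gr.GC_lad[of ord "B h"] g h by simp
    qed
    then show "card (?C A) \<le> card (?C B')" unfolding cardC .
  qed
qed

theorem theorem8:
  fixes D :: "'d set" and H :: "'h set" and X :: "('d, 'h) contract set"
    and B :: "'h \<Rightarrow> real" and f :: "'h \<Rightarrow> ('d, 'h) contract set \<Rightarrow> real"
    and ord :: "('d, 'h) contract list"
  assumes "market D H X B"
    and "\<forall>h\<in>H. \<exists>\<gamma>>0. \<forall>Y\<subseteq>contracts_of_hosp X h. f h Y = \<gamma> * real (card Y)"
    and "distinct ord" and "set ord = X"
  shows "strategy_proof D X (gda X (greedy_ChH H B ord)) \<and>
         (\<forall>P. valid_profile D X P \<longrightarrow> stable H X P f B (gda X (greedy_ChH H B ord) P))"
proof -
  note m = assms(1) and fa = assms(2) and dist = assms(3) and so = assms(4)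
  have finX: "finite X" and mX: "\<forall>x\<in>X. doc x \<in> D \<and> hosp x \<in> H \<and> 0 < wage x \<and> wage x \<le> B (hosp x)"
    and Bp: "\<forall>h\<in>H. B h > 0" using m unfolding market_def by blast+
  have g: "\<forall>h\<in>H. gr ord (B h)"
  proof
    fix h assume "h \<in> H"
    then show "gr ord (B h)" using dist so mX Bp by (unfold_locales) auto
  qed
  let ?C = "greedy_ChH H B ord"
  have ch: "chsys D X ?C" by (rule greedy_chsys[OF m dist so])
  interpret chsys D X ?C by (rule ch)
  have sp: "strategy_proof D X (gda X ?C)" by (rule DA_sp)
  have st: "stable H X P f B (gda X ?C P)" if v: "valid_profile D X P" for P
  proof -
    let ?Y = "gda X ?C P"
    have YX: "?Y \<subseteq> X" by (rule out_X)
    have Yu: "\<forall>u\<in>?Y. \<forall>v\<in>?Y. doc u = doc v \<longrightarrow> u = v" by (rule out_uniq[OF v])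
    have ism: "is_matching ?Y"
      unfolding is_matching_def
    proof (intro allI conjI)
      fix d
      have fin: "finite (contracts_of_doc ?Y d)"
        using finite_subset[OF _ finX, of "contracts_of_doc ?Y d"] YX unfolding contracts_of_doc_def by blast
      then show "finite (contracts_of_doc ?Y d)" .
      have "\<forall>a\<in>contracts_of_doc ?Y d. \<forall>b\<in>contracts_of_doc ?Y d. a = b"
      proof (intro ballI)
        fix a b assume "a \<in> contracts_of_doc ?Y d" "b \<in> contracts_of_doc ?Y d"
        then have "a \<in> ?Y" "b \<in> ?Y" "doc a = doc b" unfolding contracts_of_doc_def by simp_all
        then show "a = b" using Yu by simp
      qed
      then show "card (contracts_of_doc ?Y d) \<le> 1" using card_le_Suc0_iff_eq[OF fin] by simp
    qed
    have cohC: "contracts_of_hosp (?C A) h = GC ord (B h) (contracts_of_hosp A h)" if "h \<in> H" for A h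
      by (rule hosp_C[OF g that])
    have feas: "feasible H B ?Y"
      unfolding feasible_def w_h_def
    proof
      fix h assume h: "h \<in> H"
      have gh: "gr ord (B h)" using g h by simp
      have e: "contracts_of_hosp (?C ?Y) h = GC ord (B h) (contracts_of_hosp ?Y h)"
        by (rule cohC[OF h])
      have "contracts_of_hosp ?Y h = GC ord (B h) (contracts_of_hosp ?Y h)"
        using e unfolding out_fix .
      then show "wsum (contracts_of_hosp ?Y h) \<le> B h" using gr.GC_feas[OF gh] by metis
    qed
    have nob: "\<not> (\<exists>h\<in>H. \<exists>Z. blocks X P f B h Z ?Y)"
    proof
      assume "\<exists>h\<in>H. \<exists>Z. blocks X P f B h Z ?Y"
      then obtain h Z where h: "h \<in> H" and bl: "blocks X P f B h Z ?Y" by blast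
      have ZXh: "Z \<subseteq> contracts_of_hosp X h"
        and pr: "\<forall>x\<in>Z - ?Y. P (doc x) (Some x) (outcome ?Y (doc x))"
        and fgt: "f h Z > f h (contracts_of_hosp ?Y h)"
        and wz: "w_h h Z \<le> B h" using bl unfolding blocks_def by blast+
      have "\<exists>\<gamma>>0. \<forall>Y\<subseteq>contracts_of_hosp X h. f h Y = \<gamma> * real (card Y)" using fa h by (rule bspec)
      then obtain \<gamma> where ga: "\<gamma> > 0" "\<forall>Y\<subseteq>contracts_of_hosp X h. f h Y = \<gamma> * real (card Y)"
        by blast
      have gh: "gr ord (B h)" using g h by simp
      have ZX: "Z \<subseteq> X" using ZXh coh_sub[of X h] by (rule subset_trans)
      have Zh: "contracts_of_hosp Z h = Z" using ZXh unfolding contracts_of_hosp_def by auto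
      have "w_h h Z = wsum Z" unfolding w_h_def Zh ..
      then have wZ: "wsum Z \<le> B h" using wz by linarith
      have ZR: "Z \<subseteq> contracts_of_hosp (?Y \<union> Rf P) h"
      proof
        fix z assume zZ: "z \<in> Z"
        have "z \<in> contracts_of_hosp X h" using ZXh zZ by (rule subsetD)
        then have hz: "hosp z = h" unfolding contracts_of_hosp_def by simp
        have zX: "z \<in> X" using ZX zZ by blast
        have "z \<in> ?Y \<union> Rf P"
        proof (rule ccontr)
          assume nz: "z \<notin> ?Y \<union> Rf P"
          then have zXR: "z \<in> X - Rf P" using zX by blast
          have zm: "z \<in> Z - ?Y" using zZ nz by blast
          have pz: "P (doc z) (Some z) (outcome ?Y (doc z))" using bspec[OF pr zm] .
          show False
          proof (cases "\<exists>y\<in>?Y. doc y = doc z")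
            case False
            then have "outcome ?Y (doc z) = None" by (rule outcome_None)
            then have acc: "P (doc z) (Some z) None" using pz by simp
            have "\<exists>y\<in>?Y. doc y = doc z" using out_best[OF v zXR acc] by meson
            then show False using False by simp
          next
            case True
            then obtain y where y: "y \<in> ?Y" "doc y = doc z" by blast
            have "outcome ?Y (doc z) = Some y" using outcome_Some[OF Yu y(1)] y(2) by simp
            then have r1: "P (doc z) (Some z) (Some y)" using pz by simp
            have yc: "y \<in> Ch_D P (X - Rf P)" using y(1) out_CD by simp
            have yz: "z \<noteq> y" using y(1) nz by blast
            have r2: "P (doc y) (Some y) (Some z)" using CD_best[OF yc zXR] y(2) yz by simp
            have yX: "y \<in> X" using y(1) YX by blast
            show False using asym_doc[OF v zX yX y(2) r1] r2 y(2) by simp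
          qed
        qed
        then show "z \<in> contracts_of_hosp (?Y \<union> Rf P) h" using hz unfolding contracts_of_hosp_def by simp
      qed
      have "card Z \<le> card (GC ord (B h) (contracts_of_hosp (?Y \<union> Rf P) h))"
        by (rule gr.GC_max[OF gh]) (use ZR ZX so wZ in auto)
      also have "GC ord (B h) (contracts_of_hosp (?Y \<union> Rf P) h) = contracts_of_hosp ?Y h"
      proof -
        have e: "contracts_of_hosp (?C (?Y \<union> Rf P)) h = GC ord (B h) (contracts_of_hosp (?Y \<union> Rf P) h)"
          by (rule cohC[OF h])
        show ?thesis using e unfolding out_CYR by simp
      qed
      finally have cle: "card Z \<le> card (contracts_of_hosp ?Y h)" .
      have fZ: "f h Z = \<gamma> * real (card Z)" using ga(2) ZXh by simp
      have "contracts_of_hosp ?Y h \<subseteq> contracts_of_hosp X h" using YX unfolding contracts_of_hosp_def by blast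
      then have fY: "f h (contracts_of_hosp ?Y h) = \<gamma> * real (card (contracts_of_hosp ?Y h))" using ga(2) by simp
      have "\<gamma> * real (card Z) \<le> \<gamma> * real (card (contracts_of_hosp ?Y h))"
        using cle ga(1) by (intro mult_left_mono) auto
      then show False using fgt fZ fY by simp
    qed
    show ?thesis unfolding stable_def using YX ism feas nob by blast
  qed
  show ?thesis
  proof (intro conjI allI impI)
    show "strategy_proof D X (gda X ?C)" by (rule sp)
    fix P assume "valid_profile D X P"
    then show "stable H X P f B (gda X ?C P)" by (rule st)
  qed
qed

end
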